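(* Let $n\geq 1$. The map sending a type $\mathrm{tp}(f_1,\dots,f_n)\in S_n(\emptyset)$ (with $f_i\in M_{[0,1]}$) to $\mathrm{im}(f_1,\dots,f_n)$ is a well-defined isometric bijection from $S_n(\emptyset)$ of $\mathrm{Th}(M_{[0,1]})$ onto the set of all connected chains from $0$ to $1$ in $[0,1]^n$, where $S_n(\emptyset)$ carries the type-space metric and the set of chains carries the Hausdorff metric for compact subsets of $[0,1]^n$ equipped with the sup metric.
   Context: $M_{[0,1]}$ is the set of continuous nondecreasing functions $f:[0,1]\to[0,1]$ with $f(0)=0$, $f(1)=1$, with the sup metric, regarded as a metric structure in the language of binary predicates $\varphi_\alpha$ ($\alpha\in\mathbb{Q}\cap[0,1]$), where $\varphi_\alpha(f,g)=f(t)$ for any $t$ with $f(t)+g(t)=\alpha$. Every $n$-type of $\mathrm{Th}(M_{[0,1]})$ is realized in $M_{[0,1]}$. The type-space metric is $d(p,q)=\inf\{\max_i \sup_t|f_i(t)-g_i(t)|: \mathrm{tp}(\bar f)=p,\ \mathrm{tp}(\bar g)=q\}$. $\mathrm{im}(f_1,\dots,f_n)=\{(f_1(t),\dots,f_n(t)):t\in[0,1]\}$. A chain from $0$ to $1$ in $[0,1]^n$ is a subset linearly ordered by the coordinatewise order and containing the constant tuples $(0,\dots,0)$ and $(1,\dots,1)$. *)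

theory Defs
  imports "HOL-Analysis.Analysis"
begin

text \<open>Elements of M_[0,1]: continuous nondecreasing f on [0,1] with f 0 = 0, f 1 = 1.
  Functions are represented as real => real; only their values on [0,1] matter.\<close>

definition inM :: "(real \<Rightarrow> real) \<Rightarrow> bool" where
  "inM f \<longleftrightarrow> continuous_on {0..1} f \<and> mono_on {0..1} f \<and> f 0 = 0 \<and> f 1 = 1"

definition Mset :: "(real \<Rightarrow> real) set" where
  "Mset = {f. inM f}"

definition supdist :: "(real \<Rightarrow> real) \<Rightarrow> (real \<Rightarrow> real) \<Rightarrow> real" where
  "supdist f g = (SUP t\<in>{0..1}. \<bar>f t - g t\<bar>)"

definition phiM :: "real \<Rightarrow> (real \<Rightarrow> real) \<Rightarrow> (real \<Rightarrow> real) \<Rightarrow> real" where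
  "phiM \<alpha> f g = f (SOME t. t \<in> {0..1} \<and> f t + g t = \<alpha>)"

text \<open>Connectives: the full system {1, 1-x, x/2, truncated minus}; quantifiers sup, inf.
  Atm a i j is phi_a(x_i,x_j) (only a in Q \<inter> [0,1] are symbols; other a evaluate to 0).\<close>
datatype form =
    Atm rat nat nat
  | Dst nat nat
  | One
  | Neg form
  | Half form
  | Minus form form
  | SupQ nat form
  | InfQ nat form

primrec fv :: "form \<Rightarrow> nat set" where
  "fv (Atm a i j) = {i, j}"
| "fv (Dst i j) = {i, j}"
| "fv One = {}"
| "fv (Neg p) = fv p"
| "fv (Half p) = fv p"
| "fv (Minus p q) = fv p \<union> fv q"
| "fv (SupQ x p) = fv p - {x}"
| "fv (InfQ x p) = fv p - {x}"

primrec eval :: "form \<Rightarrow> (nat \<Rightarrow> real \<Rightarrow> real) \<Rightarrow> real" where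
  "eval (Atm a i j) e = (if 0 \<le> a \<and> a \<le> 1 then phiM (real_of_rat a) (e i) (e j) else 0)"
| "eval (Dst i j) e = supdist (e i) (e j)"
| "eval One e = 1"
| "eval (Neg p) e = 1 - eval p e"
| "eval (Half p) e = eval p e / 2"
| "eval (Minus p q) e = max (eval p e - eval q e) 0"
| "eval (SupQ x p) e = (SUP g\<in>Mset. eval p (e(x := g)))"
| "eval (InfQ x p) e = (INF g\<in>Mset. eval p (e(x := g)))"

text \<open>An n-tuple of M: fs i for i < n (entries i \<ge> n are irrelevant).\<close>
definition tuples :: "nat \<Rightarrow> (nat \<Rightarrow> real \<Rightarrow> real) set" where
  "tuples n = {fs. \<forall>i<n. inM (fs i)}"

definition tp :: "nat \<Rightarrow> (nat \<Rightarrow> real \<Rightarrow> real) \<Rightarrow> (form \<Rightarrow> real)" where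
  "tp n fs = (\<lambda>\<phi>. if fv \<phi> \<subseteq> {..<n} then eval \<phi> fs else 0)"

text \<open>S_n(empty) (every type is realized in M).\<close>
definition Sn :: "nat \<Rightarrow> (form \<Rightarrow> real) set" where
  "Sn n = tp n ` tuples n"

definition tupdist :: "nat \<Rightarrow> (nat \<Rightarrow> real \<Rightarrow> real) \<Rightarrow> (nat \<Rightarrow> real \<Rightarrow> real) \<Rightarrow> real" where
  "tupdist n fs gs = Max ((\<lambda>i. supdist (fs i) (gs i)) ` {..<n})"

definition tdist :: "nat \<Rightarrow> (form \<Rightarrow> real) \<Rightarrow> (form \<Rightarrow> real) \<Rightarrow> real" where
  "tdist n p q = Inf {tupdist n fs gs | fs gs. fs \<in> tuples n \<and> gs \<in> tuples n \<and> tp n fs = p \<and> tp n gs = q}"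

text \<open>Points of R^n are represented as nat => real, vanishing at coordinates \<ge> n
  (with the product topology on nat => real, this is a homeomorphic copy of R^n).\<close>
definition pt :: "nat \<Rightarrow> (nat \<Rightarrow> real) \<Rightarrow> (nat \<Rightarrow> real)" where
  "pt n x = (\<lambda>i. if i < n then x i else 0)"

definition im :: "nat \<Rightarrow> (nat \<Rightarrow> real \<Rightarrow> real) \<Rightarrow> (nat \<Rightarrow> real) set" where
  "im n fs = {pt n (\<lambda>i. fs i t) | t. t \<in> {0..1}}"

definition cube :: "nat \<Rightarrow> (nat \<Rightarrow> real) set" where
  "cube n = {x. (\<forall>i<n. 0 \<le> x i \<and> x i \<le> 1) \<and> (\<forall>i\<ge>n. x i = 0)}"

definition cle :: "nat \<Rightarrow> (nat \<Rightarrow> real) \<Rightarrow> (nat \<Rightarrow> real) \<Rightarrow> bool" where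
  "cle n x y \<longleftrightarrow> (\<forall>i<n. x i \<le> y i)"

definition is_chain01 :: "nat \<Rightarrow> (nat \<Rightarrow> real) set \<Rightarrow> bool" where
  "is_chain01 n C \<longleftrightarrow> C \<subseteq> cube n
     \<and> (\<forall>x\<in>C. \<forall>y\<in>C. cle n x y \<or> cle n y x)
     \<and> pt n (\<lambda>_. 0) \<in> C \<and> pt n (\<lambda>_. 1) \<in> C"

definition conn_chains :: "nat \<Rightarrow> (nat \<Rightarrow> real) set set" where
  "conn_chains n = {C. is_chain01 n C \<and> connected C}"

definition supd :: "nat \<Rightarrow> (nat \<Rightarrow> real) \<Rightarrow> (nat \<Rightarrow> real) \<Rightarrow> real" where
  "supd n x y = Max ((\<lambda>i. \<bar>x i - y i\<bar>) ` {..<n})"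

definition hausd :: "nat \<Rightarrow> (nat \<Rightarrow> real) set \<Rightarrow> (nat \<Rightarrow> real) set \<Rightarrow> real" where
  "hausd n A B = max (SUP a\<in>A. INF b\<in>B. supd n a b) (SUP b\<in>B. INF a\<in>A. supd n a b)"

definition imT :: "nat \<Rightarrow> (form \<Rightarrow> real) \<Rightarrow> (nat \<Rightarrow> real) set" where
  "imT n p = im n (SOME fs. fs \<in> tuples n \<and> tp n fs = p)"

end

theory Submission
  imports Defs
begin

lemma inM_range: "inM f \<Longrightarrow> t \<in> {0..1} \<Longrightarrow> 0 \<le> f t \<and> f t \<le> 1"
  unfolding inM_def mono_on_def
  by (metis atLeastAtMost_iff order.refl zero_le_one)

lemma inM_mono: "inM f \<Longrightarrow> s \<in> {0..1} \<Longrightarrow> t \<in> {0..1} \<Longrightarrow> s \<le> t \<Longrightarrow> f s \<le> f t"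
  unfolding inM_def mono_on_def by blast

lemma inM_cont: "inM f \<Longrightarrow> continuous_on {0..1} f"
  unfolding inM_def by blast

lemma inM_0: "inM f \<Longrightarrow> f 0 = 0" and inM_1: "inM f \<Longrightarrow> f 1 = 1"
  unfolding inM_def by auto

lemma phi_ex:
  assumes "inM f" "inM g" "0 \<le> a" "a \<le> 1"
  shows "\<exists>t\<in>{0..1}. f t + g t = a"
proof -
  have c: "continuous_on {0..1} (\<lambda>t. f t + g t)"
    using assms by (intro continuous_intros inM_cont)
  have "(\<lambda>t. f t + g t) 0 \<le> a" "a \<le> (\<lambda>t. f t + g t) 1"
    using assms by (auto simp: inM_0 inM_1)
  from IVT'[OF this _ c] show ?thesis by auto
qed

lemma phi_eq:
  assumes "inM f" "inM g" "t \<in> {0..1}" "f t + g t = a"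
  shows "phiM a f g = f t"
proof -
  have "\<exists>t. t \<in> {0..1} \<and> f t + g t = a" using assms by blast
  then have s: "(SOME t. t \<in> {0..1} \<and> f t + g t = a) \<in> {0..1}"
     "f (SOME t. t \<in> {0..1} \<and> f t + g t = a) + g (SOME t. t \<in> {0..1} \<and> f t + g t = a) = a"
    by (metis (mono_tags, lifting) someI_ex)+
  define s0 where "s0 = (SOME t. t \<in> {0..1} \<and> f t + g t = a)"
  have s0: "s0 \<in> {0..1}" "f s0 + g s0 = a" using s unfolding s0_def by auto
  have "f s0 = f t"
  proof (cases "s0 \<le> t")
    case True
    then show ?thesis using inM_mono[OF assms(1) s0(1) assms(3)] inM_mono[OF assms(2) s0(1) assms(3)] s0 assms(4)
      by linarith
  next
    case False
    then show ?thesis using inM_mono[OF assms(1) assms(3) s0(1)] inM_mono[OF assms(2) assms(3) s0(1)] s0 assms(4)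
      by linarith
  qed
  then show ?thesis unfolding phiM_def s0_def by simp
qed

lemma phi_point:
  assumes "inM f" "inM g" "0 \<le> a" "a \<le> 1"
  obtains t where "t \<in> {0..1}" "f t + g t = a" "phiM a f g = f t"
  using phi_ex[OF assms] phi_eq[OF assms(1,2)] by blast

lemma phi_gt:
  assumes "inM f" "inM y" "0 \<le> a" "a \<le> 1"
  shows "phiM a f y > b \<longleftrightarrow> (\<exists>t\<in>{0..1}. f t > b \<and> y t < a - b)"
proof -
  obtain s where s: "s \<in> {0..1}" "f s + y s = a" "phiM a f y = f s"
    using phi_point[OF assms] .
  show ?thesis
  proof
    assume "phiM a f y > b" then show "\<exists>t\<in>{0..1}. f t > b \<and> y t < a - b"
      using s by (intro bexI[of _ s]) auto
  next
    assume "\<exists>t\<in>{0..1}. f t > b \<and> y t < a - b"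
    then obtain t where t: "t \<in> {0..1}" "f t > b" "y t < a - b" by blast
    show "phiM a f y > b"
    proof (cases "t \<le> s")
      case True then show ?thesis using inM_mono[OF assms(1) t(1) s(1)] t s by linarith
    next
      case False then show ?thesis using inM_mono[OF assms(2) s(1) t(1)] t s by linarith
    qed
  qed
qed

lemma phi_lt:
  assumes "inM f" "inM y" "0 \<le> a" "a \<le> 1"
  shows "phiM a f y < b \<longleftrightarrow> (\<exists>t\<in>{0..1}. f t < b \<and> y t > a - b)"
proof -
  obtain s where s: "s \<in> {0..1}" "f s + y s = a" "phiM a f y = f s"
    using phi_point[OF assms] .
  show ?thesis
  proof
    assume "phiM a f y < b" then show "\<exists>t\<in>{0..1}. f t < b \<and> y t > a - b"
      using s by (intro bexI[of _ s]) auto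
  next
    assume "\<exists>t\<in>{0..1}. f t < b \<and> y t > a - b"
    then obtain t where t: "t \<in> {0..1}" "f t < b" "y t > a - b" by blast
    show "phiM a f y < b"
    proof (cases "s \<le> t")
      case True then show ?thesis using inM_mono[OF assms(1) s(1) t(1)] t s by linarith
    next
      case False then show ?thesis using inM_mono[OF assms(2) t(1) s(1)] t s by linarith
    qed
  qed
qed

lemma phi_range:
  assumes "inM f" "inM g" "0 \<le> a" "a \<le> 1"
  shows "0 \<le> phiM a f g \<and> phiM a f g \<le> 1"
  using phi_point[OF assms] inM_range[OF assms(1)] by metis

lemma Mset_id: "(\<lambda>t. t) \<in> Mset"
  unfolding Mset_def inM_def by (auto intro!: continuous_intros simp: mono_on_def)

lemma Mset_ne: "Mset \<noteq> {}" using Mset_id by blast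

lemma supdist_props:
  assumes "inM f" "inM g"
  shows "0 \<le> supdist f g" "supdist f g \<le> 1" "\<And>t. t \<in> {0..1} \<Longrightarrow> \<bar>f t - g t\<bar> \<le> supdist f g"
proof -
  have b: "\<And>t. t \<in> {0..1} \<Longrightarrow> \<bar>f t - g t\<bar> \<le> 1"
    using inM_range[OF assms(1)] inM_range[OF assms(2)] by (simp add: abs_le_iff) (smt (verit))
  have bdd: "bdd_above ((\<lambda>t. \<bar>f t - g t\<bar>) ` {0..1})" using b by (intro bdd_aboveI2) 
  show u: "\<And>t. t \<in> {0..1} \<Longrightarrow> \<bar>f t - g t\<bar> \<le> supdist f g"
    unfolding supdist_def using bdd by (rule cSUP_upper2) auto
  show "0 \<le> supdist f g" using u[of 0] by auto
  show "supdist f g \<le> 1" unfolding supdist_def using b by (intro cSUP_least) auto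
qed

lemma supdist_le:
  assumes "\<And>t. t \<in> {0..(1::real)} \<Longrightarrow> \<bar>f t - g t\<bar> \<le> c"
  shows "supdist f g \<le> c"
  unfolding supdist_def using assms by (intro cSUP_least) auto

lemma eval01: "(\<forall>i\<in>fv \<phi>. e i \<in> Mset) \<Longrightarrow> 0 \<le> eval \<phi> e \<and> eval \<phi> e \<le> 1"
proof (induction \<phi> arbitrary: e)
  case (Atm a i j)
  then show ?case using phi_range[of "e i" "e j" "real_of_rat a"]
    by (auto simp: Mset_def of_rat_less_eq[symmetric])
next
  case (Dst i j)
  then show ?case using supdist_props[of "e i" "e j"] by (auto simp: Mset_def)
next
  case (SupQ x p)
  have h: "\<And>g. g \<in> Mset \<Longrightarrow> 0 \<le> eval p (e(x := g)) \<and> eval p (e(x := g)) \<le> 1"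
    using SupQ by (intro SupQ.IH) auto
  have bdd: "bdd_above ((\<lambda>g. eval p (e(x := g))) ` Mset)" using h by (intro bdd_aboveI2) blast
  have "0 \<le> (SUP g\<in>Mset. eval p (e(x := g)))"
    using h Mset_id by (intro cSUP_upper2[OF bdd, of "\<lambda>t. t"]) auto
  moreover have "(SUP g\<in>Mset. eval p (e(x := g))) \<le> 1"
    using h Mset_ne by (intro cSUP_least) auto
  ultimately show ?case by simp
next
  case (InfQ x p)
  have h: "\<And>g. g \<in> Mset \<Longrightarrow> 0 \<le> eval p (e(x := g)) \<and> eval p (e(x := g)) \<le> 1"
    using InfQ by (intro InfQ.IH) auto
  have bdd: "bdd_below ((\<lambda>g. eval p (e(x := g))) ` Mset)" using h by (intro bdd_belowI2) blast
  have "(INF g\<in>Mset. eval p (e(x := g))) \<le> 1"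
    using h Mset_id by (intro cINF_lower2[OF bdd, of "\<lambda>t. t"]) auto
  moreover have "0 \<le> (INF g\<in>Mset. eval p (e(x := g)))"
    using h Mset_ne by (intro cINF_greatest) auto
  ultimately show ?case by simp
next
  case (Half p)
  then have "0 \<le> eval p e \<and> eval p e \<le> 1" by simp
  then show ?case by simp
next
  case (Minus p q)
  then have "0 \<le> eval p e \<and> eval p e \<le> 1" "0 \<le> eval q e \<and> eval q e \<le> 1" by simp_all
  then show ?case by simp
qed (auto)

lemma SUP_diff_le:
  fixes A B :: "'a \<Rightarrow> real"
  assumes "S \<noteq> {}" "\<And>x. x \<in> S \<Longrightarrow> \<bar>A x - B x\<bar> \<le> c"
    "bdd_above (A ` S)" "bdd_above (B ` S)"
  shows "\<bar>(SUP x\<in>S. A x) - (SUP x\<in>S. B x)\<bar> \<le> c"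
proof -
  have 1: "(SUP x\<in>S. A x) \<le> (SUP x\<in>S. B x) + c"
  proof (rule cSUP_least[OF assms(1)])
    fix x assume "x \<in> S"
    then have "A x \<le> B x + c" "B x \<le> (SUP x\<in>S. B x)" using assms(2)[of x] cSUP_upper[OF _ assms(4)] by auto
    then show "A x \<le> (SUP x\<in>S. B x) + c" by linarith
  qed
  have 2: "(SUP x\<in>S. B x) \<le> (SUP x\<in>S. A x) + c"
  proof (rule cSUP_least[OF assms(1)])
    fix x assume "x \<in> S"
    then have "B x \<le> A x + c" "A x \<le> (SUP x\<in>S. A x)" using assms(2)[of x] cSUP_upper[OF _ assms(3)] by auto
    then show "B x \<le> (SUP x\<in>S. A x) + c" by linarith
  qed
  from 1 2 show ?thesis by linarith
qed

lemma INF_diff_le: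
  fixes A B :: "'a \<Rightarrow> real"
  assumes "S \<noteq> {}" "\<And>x. x \<in> S \<Longrightarrow> \<bar>A x - B x\<bar> \<le> c"
    "bdd_below (A ` S)" "bdd_below (B ` S)"
  shows "\<bar>(INF x\<in>S. A x) - (INF x\<in>S. B x)\<bar> \<le> c"
proof -
  have 1: "(INF x\<in>S. A x) - c \<le> (INF x\<in>S. B x)"
  proof (rule cINF_greatest[OF assms(1)])
    fix x assume "x \<in> S"
    then have "B x \<ge> A x - c" "A x \<ge> (INF x\<in>S. A x)" using assms(2)[of x] cINF_lower[OF assms(3)] by auto
    then show "(INF x\<in>S. A x) - c \<le> B x" by linarith
  qed
  have 2: "(INF x\<in>S. B x) - c \<le> (INF x\<in>S. A x)"
  proof (rule cINF_greatest[OF assms(1)])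
    fix x assume "x \<in> S"
    then have "A x \<ge> B x - c" "B x \<ge> (INF x\<in>S. B x)" using assms(2)[of x] cINF_lower[OF assms(4)] by auto
    then show "(INF x\<in>S. B x) - c \<le> A x" by linarith
  qed
  from 1 2 show ?thesis by linarith
qed

lemma phi_lip:
  assumes "inM f" "inM g" "inM f'" "inM g'" "0 \<le> a" "a \<le> 1"
    "supdist f f' \<le> d" "supdist g g' \<le> d"
  shows "\<bar>phiM a f g - phiM a f' g'\<bar> \<le> 3 * d"
proof -
  obtain s where s: "s \<in> {0..1}" "f s + g s = a" "phiM a f g = f s"
    using phi_point[OF assms(1,2,5,6)] .
  obtain s' where s': "s' \<in> {0..1}" "f' s' + g' s' = a" "phiM a f' g' = f' s'"
    using phi_point[OF assms(3,4,5,6)] .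
  have df: "\<bar>f s' - f' s'\<bar> \<le> d" using supdist_props(3)[OF assms(1,3) s'(1)] assms(7) by linarith
  have dg: "\<bar>g s' - g' s'\<bar> \<le> d" using supdist_props(3)[OF assms(2,4) s'(1)] assms(8) by linarith
  have "\<bar>f s - f s'\<bar> \<le> 2 * d"
  proof (cases "s \<le> s'")
    case True
    then show ?thesis using inM_mono[OF assms(1) s(1) s'(1)] inM_mono[OF assms(2) s(1) s'(1)] s s' df dg
      by (simp add: abs_le_iff)
  next
    case False
    then show ?thesis using inM_mono[OF assms(1) s'(1) s(1)] inM_mono[OF assms(2) s'(1) s(1)] s s' df dg
      by (simp add: abs_le_iff)
  qed
  then show ?thesis using s s' df by linarith
qed

primrec lip :: "form \<Rightarrow> real" where
  "lip (Atm a i j) = 3"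
| "lip (Dst i j) = 2"
| "lip One = 0"
| "lip (Neg p) = lip p"
| "lip (Half p) = lip p"
| "lip (Minus p q) = lip p + lip q"
| "lip (SupQ x p) = lip p"
| "lip (InfQ x p) = lip p"

lemma lip_nonneg: "0 \<le> lip \<phi>"
  by (induction \<phi>) auto

lemma eval_lip:
  "0 \<le> d \<Longrightarrow> (\<forall>i\<in>fv \<phi>. e i \<in> Mset \<and> e' i \<in> Mset \<and> supdist (e i) (e' i) \<le> d)
    \<Longrightarrow> \<bar>eval \<phi> e - eval \<phi> e'\<bar> \<le> lip \<phi> * d"
proof (induction \<phi> arbitrary: e e')
  case (Atm a i j)
  show ?case
  proof (cases "0 \<le> a \<and> a \<le> 1")
    case True
    have "0 \<le> real_of_rat a" "real_of_rat a \<le> 1" using True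
      by (simp_all add: of_rat_less_eq[symmetric] del: of_rat_less_eq)
    then show ?thesis using Atm True phi_lip[of "e i" "e j" "e' i" "e' j" "real_of_rat a" d]
      by (auto simp: Mset_def)
  qed (use Atm in auto)
next
  case (Dst i j)
  have m: "inM (e i)" "inM (e j)" "inM (e' i)" "inM (e' j)" and dd: "supdist (e i) (e' i) \<le> d" "supdist (e j) (e' j) \<le> d"
    using Dst by (auto simp: Mset_def)
  have p: "\<And>t. t \<in> {0..1} \<Longrightarrow> \<bar>e i t - e' i t\<bar> \<le> d \<and> \<bar>e j t - e' j t\<bar> \<le> d"
    using supdist_props(3)[OF m(1,3)] supdist_props(3)[OF m(2,4)] dd by fastforce
  have 1: "supdist (e i) (e j) \<le> supdist (e' i) (e' j) + 2 * d"
    unfolding supdist_def[of "e i"]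
  proof (rule cSUP_least)
    fix t :: real assume t: "t \<in> {0..1}"
    have "\<bar>e' i t - e' j t\<bar> \<le> supdist (e' i) (e' j)" using supdist_props(3)[OF m(3,4) t] .
    then show "\<bar>e i t - e j t\<bar> \<le> supdist (e' i) (e' j) + 2 * d" using p[OF t] by linarith
  qed auto
  have 2: "supdist (e' i) (e' j) \<le> supdist (e i) (e j) + 2 * d"
    unfolding supdist_def[of "e' i"]
  proof (rule cSUP_least)
    fix t :: real assume t: "t \<in> {0..1}"
    have "\<bar>e i t - e j t\<bar> \<le> supdist (e i) (e j)" using supdist_props(3)[OF m(1,2) t] .
    then show "\<bar>e' i t - e' j t\<bar> \<le> supdist (e i) (e j) + 2 * d" using p[OF t] by linarith
  qed auto
  show ?case using 1 2 by simp
next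
  case (Neg p)
  then have "\<bar>eval p e - eval p e'\<bar> \<le> lip p * d" by simp
  then show ?case by (simp add: abs_minus_commute)
next
  case (Half p)
  then have "\<bar>eval p e - eval p e'\<bar> \<le> lip p * d" by simp
  then show ?case by simp
next
  case (Minus p q)
  have "\<bar>eval p e - eval p e'\<bar> \<le> lip p * d" "\<bar>eval q e - eval q e'\<bar> \<le> lip q * d"
    using Minus by auto
  then show ?case by (simp add: distrib_right)
next
  case (SupQ x p)
  have h: "\<And>g. g \<in> Mset \<Longrightarrow> \<bar>eval p (e(x := g)) - eval p (e'(x := g))\<bar> \<le> lip p * d"
  proof -
    fix g assume g: "g \<in> Mset"
    have "inM g" using g by (simp add: Mset_def)
    then have "supdist g g \<le> d" using supdist_le[of g g d] SupQ.prems(1) by simp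
    then show "\<bar>eval p (e(x := g)) - eval p (e'(x := g))\<bar> \<le> lip p * d"
      using SupQ g by (intro SupQ.IH) auto
  qed
  have b: "\<And>e. (\<forall>i\<in>fv (SupQ x p). e i \<in> Mset) \<Longrightarrow> bdd_above ((\<lambda>g. eval p (e(x := g))) ` Mset)"
    using eval01[of p] by (intro bdd_aboveI2[where M=1]) auto
  show ?case using SUP_diff_le[OF Mset_ne h b b] SupQ.prems by simp
next
  case (InfQ x p)
  have h: "\<And>g. g \<in> Mset \<Longrightarrow> \<bar>eval p (e(x := g)) - eval p (e'(x := g))\<bar> \<le> lip p * d"
  proof -
    fix g assume g: "g \<in> Mset"
    have "inM g" using g by (simp add: Mset_def)
    then have "supdist g g \<le> d" using supdist_le[of g g d] InfQ.prems(1) by simp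
    then show "\<bar>eval p (e(x := g)) - eval p (e'(x := g))\<bar> \<le> lip p * d"
      using InfQ g by (intro InfQ.IH) auto
  qed
  have b: "\<And>e. (\<forall>i\<in>fv (InfQ x p). e i \<in> Mset) \<Longrightarrow> bdd_below ((\<lambda>g. eval p (e(x := g))) ` Mset)"
    using eval01[of p] by (intro bdd_belowI2[where m=0]) auto
  show ?case using INF_diff_le[OF Mset_ne h b b] InfQ.prems by simp
qed (auto)

definition rep :: "(real \<Rightarrow> real) \<Rightarrow> (real \<Rightarrow> real) \<Rightarrow> (real \<Rightarrow> real)" where
  "rep h f = (\<lambda>t. if t \<in> {0..1} then f (h t) else f t)"

definition hpair :: "(real \<Rightarrow> real) \<Rightarrow> (real \<Rightarrow> real) \<Rightarrow> bool" where
  "hpair h h' \<longleftrightarrow> (\<forall>t\<in>{0..1}. h t \<in> {0..1} \<and> h' t \<in> {0..1} \<and> h (h' t) = t \<and> h' (h t) = t)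
     \<and> continuous_on {0..1} h \<and> continuous_on {0..1} h' \<and> mono_on {0..1} h \<and> mono_on {0..1} h'"

lemma hpair_sym: "hpair h h' \<Longrightarrow> hpair h' h"
  unfolding hpair_def by blast

lemma hpair_01:
  assumes "hpair h h'" shows "h 0 = 0" "h 1 = 1"
proof -
  have a: "h' 0 \<in> {0..1}" "h (h' 0) = 0" "h 0 \<in> {0..1}" "h' 1 \<in> {0..1}" "h (h' 1) = 1" "h 1 \<in> {0..1}"
    using assms unfolding hpair_def by auto
  have m: "mono_on {0..1} h" using assms unfolding hpair_def by auto
  have "h 0 \<le> h (h' 0)" using m a by (intro mono_onD[OF m]) auto
  then show "h 0 = 0" using a by auto
  have "h (h' 1) \<le> h 1" using m a by (intro mono_onD[OF m]) auto
  then show "h 1 = 1" using a by auto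
qed

lemma rep_inM:
  assumes "hpair h h'" "inM f" shows "inM (rep h f)"
proof -
  have hr: "h ` {0..1} \<subseteq> {0..1}" using assms(1) unfolding hpair_def by auto
  have c: "continuous_on {0..1} (\<lambda>t. f (h t))"
    using assms hr unfolding hpair_def by (intro continuous_on_compose2[OF inM_cont[OF assms(2)]]) auto
  have "continuous_on {0..1} (rep h f)"
    using c by (rule continuous_on_cong[THEN iffD1, rotated 2]) (auto simp: rep_def)
  moreover have "mono_on {0..1} (rep h f)"
    unfolding mono_on_def rep_def
  proof (intro allI impI)
    fix r s :: real assume "r \<in> {0..1} \<and> s \<in> {0..1} \<and> r \<le> s"
    then have "h r \<le> h s" "h r \<in> {0..1}" "h s \<in> {0..1}" using assms(1) unfolding hpair_def mono_on_def by auto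
    then show "(if r \<in> {0..1} then f (h r) else f r) \<le> (if s \<in> {0..1} then f (h s) else f s)"
      using inM_mono[OF assms(2)] \<open>r \<in> {0..1} \<and> s \<in> {0..1} \<and> r \<le> s\<close> by auto
  qed
  ultimately show ?thesis using hpair_01[OF assms(1)] assms(2) by (auto simp: inM_def rep_def)
qed

lemma rep_rep: "hpair h h' \<Longrightarrow> rep h' (rep h f) = f"
  unfolding rep_def hpair_def by (auto intro!: ext)

lemma Mset_rep: assumes "hpair h h'" shows "rep h ` Mset = Mset"
proof
  show "rep h ` Mset \<subseteq> Mset" using rep_inM[OF assms] by (auto simp: Mset_def)
  show "Mset \<subseteq> rep h ` Mset"
  proof
    fix f assume "f \<in> Mset"
    then have "rep h' f \<in> Mset" "f = rep h (rep h' f)"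
      using rep_inM[OF hpair_sym[OF assms]] rep_rep[OF hpair_sym[OF assms]] by (auto simp: Mset_def)
    then show "f \<in> rep h ` Mset" by blast
  qed
qed

lemma hpair_image: assumes "hpair h h'" shows "h ` {0..1} = {0..1}"
proof
  show "h ` {0..1} \<subseteq> {0..1}" using assms unfolding hpair_def by auto
  show "{0..1} \<subseteq> h ` {0..1}"
  proof
    fix t :: real assume t: "t \<in> {0..1}"
    then have "h' t \<in> {0..1}" "h (h' t) = t" using assms unfolding hpair_def by auto
    then show "t \<in> h ` {0..1}" by (metis imageI)
  qed
qed

lemma supdist_rep: assumes "hpair h h'" shows "supdist (rep h f) (rep h g) = supdist f g"
proof -
  have "supdist (rep h f) (rep h g) = (SUP t\<in>{0..1}. (\<lambda>s. \<bar>f s - g s\<bar>) (h t))"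
    unfolding supdist_def rep_def by (intro SUP_cong) auto
  also have "\<dots> = (SUP s\<in>h ` {0..1}. \<bar>f s - g s\<bar>)" by (simp add: image_image)
  also have "\<dots> = supdist f g" unfolding supdist_def hpair_image[OF assms] ..
  finally show ?thesis .
qed

lemma phi_rep:
  assumes "hpair h h'" "inM f" "inM g" "0 \<le> a" "a \<le> 1"
  shows "phiM a (rep h f) (rep h g) = phiM a f g"
proof -
  obtain t where t: "t \<in> {0..1}" "rep h f t + rep h g t = a" "phiM a (rep h f) (rep h g) = rep h f t"
    using phi_point[OF rep_inM[OF assms(1,2)] rep_inM[OF assms(1,3)] assms(4,5)] .
  have ht: "h t \<in> {0..1}" using assms(1) t(1) unfolding hpair_def by auto
  have "f (h t) + g (h t) = a" using t by (simp add: rep_def)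
  then have "phiM a f g = f (h t)" using phi_eq[OF assms(2,3) ht] by simp
  then show ?thesis using t by (simp add: rep_def)
qed

lemma eval_rep:
  assumes "hpair h h'"
  shows "(\<forall>i\<in>fv \<phi>. e i \<in> Mset) \<Longrightarrow> eval \<phi> (\<lambda>i. rep h (e i)) = eval \<phi> e"
proof (induction \<phi> arbitrary: e)
  case (Atm a i j)
  show ?case
  proof (cases "0 \<le> a \<and> a \<le> 1")
    case True
    have "0 \<le> real_of_rat a" "real_of_rat a \<le> 1" using True
      by (simp_all add: of_rat_less_eq[symmetric] del: of_rat_less_eq)
    then show ?thesis using Atm True phi_rep[OF assms, of "e i" "e j" "real_of_rat a"]
      by (auto simp: Mset_def)
  qed auto
next
  case (Dst i j)
  then show ?case using supdist_rep[OF assms] by simp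
next
  case (SupQ x p)
  have "eval (SupQ x p) (\<lambda>i. rep h (e i)) = (SUP g\<in>rep h ` Mset. eval p ((\<lambda>i. rep h (e i))(x := g)))"
    using Mset_rep[OF assms] by simp
  also have "\<dots> = (SUP g\<in>Mset. eval p ((\<lambda>i. rep h (e i))(x := rep h g)))"
    by (simp add: image_image)
  also have "\<dots> = (SUP g\<in>Mset. eval p (\<lambda>i. rep h ((e(x := g)) i)))"
    by (intro SUP_cong refl arg_cong[where f="eval p"]) auto
  also have "\<dots> = (SUP g\<in>Mset. eval p (e(x := g)))"
    using SupQ by (intro SUP_cong refl SupQ.IH) auto
  finally show ?case by simp
next
  case (InfQ x p)
  have "eval (InfQ x p) (\<lambda>i. rep h (e i)) = (INF g\<in>rep h ` Mset. eval p ((\<lambda>i. rep h (e i))(x := g)))"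
    using Mset_rep[OF assms] by simp
  also have "\<dots> = (INF g\<in>Mset. eval p ((\<lambda>i. rep h (e i))(x := rep h g)))"
    by (simp add: image_image)
  also have "\<dots> = (INF g\<in>Mset. eval p (\<lambda>i. rep h ((e(x := g)) i)))"
    by (intro INF_cong refl arg_cong[where f="eval p"]) auto
  also have "\<dots> = (INF g\<in>Mset. eval p (e(x := g)))"
    using InfQ by (intro INF_cong refl InfQ.IH) auto
  finally show ?case by simp
qed auto

lemma homeo_F:
  fixes F :: "real \<Rightarrow> real"
  assumes c: "continuous_on {0..1} F" and sm: "strict_mono_on {0..1} F" and F0: "F 0 = 0" and F1: "F 1 = 1"
  shows "F ` {0..1} = {0..1}"
    "\<And>s. s \<in> {0..1} \<Longrightarrow> inv_into {0..1} F s \<in> {0..1} \<and> F (inv_into {0..1} F s) = s"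
    "\<And>t. t \<in> {0..1} \<Longrightarrow> inv_into {0..1} F (F t) = t"
    "continuous_on {0..1} (inv_into {0..1} F)"
    "mono_on {0..1} (inv_into {0..1} F)"
    "mono_on {0..1} F"
proof -
  have mo: "mono_on {0..1} F" using sm by (rule strict_mono_on_imp_mono_on)
  show "mono_on {0..1} F" by fact
  show im: "F ` {0..1} = {0..1}"
  proof
    show "F ` {0..1} \<subseteq> {0..1}"
    proof
      fix y assume "y \<in> F ` {0..1}"
      then obtain t where t: "t \<in> {0..1}" "y = F t" by auto
      have "F 0 \<le> F t" "F t \<le> F 1" using t by (auto intro!: mono_onD[OF mo])
      then show "y \<in> {0..1}" using t F0 F1 by auto
    qed
    show "{0..1} \<subseteq> F ` {0..1}"
    proof
      fix y :: real assume y: "y \<in> {0..1}"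
      have "\<exists>x. 0 \<le> x \<and> x \<le> 1 \<and> F x = y" using y F0 F1 by (intro IVT'[OF _ _ _ c]) auto
      then show "y \<in> F ` {0..1}" by force
    qed
  qed
  have inj: "inj_on F {0..1}" using sm by (rule strict_mono_on_imp_inj_on)
  show "\<And>s. s \<in> {0..1} \<Longrightarrow> inv_into {0..1} F s \<in> {0..1} \<and> F (inv_into {0..1} F s) = s"
    using im by (metis f_inv_into_f inv_into_into)
  show ii: "\<And>t. t \<in> {0..1} \<Longrightarrow> inv_into {0..1} F (F t) = t" using inj by (simp add: inv_into_f_f)
  show "continuous_on {0..1} (inv_into {0..1} F)"
    using continuous_on_inv[OF c compact_Icc, of "inv_into {0..1} F"] ii im by auto
  show "mono_on {0..1} (inv_into {0..1} F)"
  proof (rule mono_onI)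
    fix r s :: real assume rs: "r \<in> {0..1}" "s \<in> {0..1}" "r \<le> s"
    have a: "inv_into {0..1} F r \<in> {0..1}" "F (inv_into {0..1} F r) = r"
      "inv_into {0..1} F s \<in> {0..1}" "F (inv_into {0..1} F s) = s"
      using rs im by (metis f_inv_into_f inv_into_into)+
    show "inv_into {0..1} F r \<le> inv_into {0..1} F s"
    proof (rule ccontr)
      assume "\<not> ?thesis"
      then have "F (inv_into {0..1} F s) < F (inv_into {0..1} F r)"
        using a by (intro strict_mono_onD[OF sm]) auto
      then show False using a rs by auto
    qed
  qed
qed

lemma hpair_comp:
  fixes F G :: "real \<Rightarrow> real"
  assumes "continuous_on {0..1} F" "strict_mono_on {0..1} F" "F 0 = 0" "F 1 = 1"
    "continuous_on {0..1} G" "strict_mono_on {0..1} G" "G 0 = 0" "G 1 = 1"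
  shows "hpair (\<lambda>t. inv_into {0..1} F (G t)) (\<lambda>t. inv_into {0..1} G (F t))"
proof -
  note f = homeo_F[OF assms(1-4)] and g = homeo_F[OF assms(5-8)]
  have Fr: "\<And>t. t \<in> {0..1} \<Longrightarrow> F t \<in> {0..1}" and Gr: "\<And>t. t \<in> {0..1} \<Longrightarrow> G t \<in> {0..1}"
    using f(1) g(1) by auto
  show ?thesis unfolding hpair_def
  proof (intro conjI ballI)
    fix t :: real assume t: "t \<in> {0..1}"
    show "inv_into {0..1} F (G t) \<in> {0..1}" using f(2) Gr t by blast
    show "inv_into {0..1} G (F t) \<in> {0..1}" using g(2) Fr t by blast
    show "inv_into {0..1} F (G (inv_into {0..1} G (F t))) = t" using g(2) f(3) Fr t by auto
    show "inv_into {0..1} G (F (inv_into {0..1} F (G t))) = t" using f(2) g(3) Gr t by auto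
  next
    show "continuous_on {0..1} (\<lambda>t. inv_into {0..1} F (G t))"
      by (rule continuous_on_compose2[OF f(4) assms(5)]) (use Gr in auto)
    show "continuous_on {0..1} (\<lambda>t. inv_into {0..1} G (F t))"
      by (rule continuous_on_compose2[OF g(4) assms(1)]) (use Fr in auto)
    show "mono_on {0..1} (\<lambda>t. inv_into {0..1} F (G t))"
      using f(5) g(6) Gr by (auto simp: mono_on_def)
    show "mono_on {0..1} (\<lambda>t. inv_into {0..1} G (F t))"
      using g(5) f(6) Fr by (auto simp: mono_on_def)
  qed
qed

lemma cmp_bound:
  fixes x y :: "nat \<Rightarrow> real"
  assumes "cle n x y \<or> cle n y x" "i < n"
  shows "\<bar>x i - y i\<bar> \<le> \<bar>(\<Sum>j<n. x j) - (\<Sum>j<n. y j)\<bar>"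
  using assms(1)
proof
  assume c: "cle n x y"
  have "y i - x i \<le> (\<Sum>j<n. y j - x j)"
    using c assms(2) by (intro member_le_sum) (auto simp: cle_def)
  moreover have "x i \<le> y i" using c assms(2) by (auto simp: cle_def)
  ultimately show ?thesis by (simp add: sum_subtractf)
next
  assume c: "cle n y x"
  have "x i - y i \<le> (\<Sum>j<n. x j - y j)"
    using c assms(2) by (intro member_le_sum) (auto simp: cle_def)
  moreover have "y i \<le> x i" using c assms(2) by (auto simp: cle_def)
  ultimately show ?thesis by (simp add: sum_subtractf)
qed

lemma tuples_inM: "fs \<in> tuples n \<Longrightarrow> i < n \<Longrightarrow> inM (fs i)"
  unfolding tuples_def by auto

lemma tuple_cle:
  assumes "fs \<in> tuples n" "s \<in> {0..1}" "t \<in> {0..1}" "s \<le> t"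
  shows "cle n (\<lambda>i. fs i s) (\<lambda>i. fs i t)"
  using assms tuples_inM inM_mono unfolding cle_def by blast

lemma tuple_cmp:
  assumes "fs \<in> tuples n" "s \<in> {0..1}" "t \<in> {0..1}"
  shows "cle n (\<lambda>i. fs i s) (\<lambda>i. fs i t) \<or> cle n (\<lambda>i. fs i t) (\<lambda>i. fs i s)"
  using tuple_cle[OF assms] tuple_cle[OF assms(1,3,2)] by linarith

lemma im_point:
  assumes "im n fs = im n gs" "t \<in> {0..1}"
  obtains t' where "t' \<in> {0..1}" "\<And>j. j < n \<Longrightarrow> fs j t = gs j t'"
proof -
  have "pt n (\<lambda>i. fs i t) \<in> im n gs" using assms unfolding im_def by auto
  then obtain t' where t': "t' \<in> {0..1}" "pt n (\<lambda>i. fs i t) = pt n (\<lambda>i. gs i t')"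
    unfolding im_def by auto
  have "\<And>j. j < n \<Longrightarrow> fs j t = gs j t'"
    using fun_cong[OF t'(2)] unfolding pt_def by (metis)
  then show ?thesis using t' that by blast
qed

lemma small_zero:
  fixes x C :: real
  assumes "0 \<le> C" "\<And>e. 0 < e \<Longrightarrow> e \<le> 1/2 \<Longrightarrow> \<bar>x\<bar> \<le> C * e"
  shows "x = 0"
proof (rule ccontr)
  assume "x \<noteq> 0"
  define e where "e = min (1/2) (\<bar>x\<bar> / (2 * (C + 1)))"
  have xp: "0 < \<bar>x\<bar>" using \<open>x \<noteq> 0\<close> by simp
  have q: "0 < \<bar>x\<bar> / (2 * (C + 1))" using xp assms(1) by (intro divide_pos_pos) auto
  have e1: "0 < e" unfolding e_def using q by simp
  have e2': "e \<le> 1/2" unfolding e_def by (rule min.cobounded1)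
  note e = e1 e2'
  have e2: "e \<le> \<bar>x\<bar> / (2 * (C + 1))" unfolding e_def by (rule min.cobounded2)
  have "C * e \<le> (C + 1) * (\<bar>x\<bar> / (2 * (C + 1)))"
    using assms(1) e e2 by (intro mult_mono) auto
  also have "\<dots> = \<bar>x\<bar> / 2" using assms(1) by (simp add: field_simps)
  finally show False using assms(2)[OF e] \<open>x \<noteq> 0\<close> by linarith
qed

lemma tp_of_im:
  assumes n: "n \<ge> 1" and fs: "fs \<in> tuples n" and gs: "gs \<in> tuples n" and im: "im n fs = im n gs"
  shows "tp n fs = tp n gs"
proof -
  have approx: "\<exists>h h'. hpair h h' \<and> (\<forall>i<n. supdist (rep h (fs i)) (gs i) \<le> 2 * real n * e)"
    if e: "0 < e" "e \<le> 1/2" for e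
  proof -
    define F where "F t = (1 - e) * (\<Sum>i<n. fs i t) / real n + e * t" for t
    define G where "G t = (1 - e) * (\<Sum>i<n. gs i t) / real n + e * t" for t
    have props: "continuous_on {0..1} H \<and> strict_mono_on {0..1} H \<and> H 0 = 0 \<and> H 1 = 1"
      if hs: "hs \<in> tuples n" and H: "H = (\<lambda>t. (1 - e) * (\<Sum>i<n. hs i t) / real n + e * t)" for hs H
    proof (intro conjI)
      have ci: "\<And>i. i \<in> {..<n} \<Longrightarrow> continuous_on {0..1} (hs i)"
        using hs inM_cont tuples_inM by blast
      have "continuous_on {0..1} (\<lambda>t. \<Sum>i<n. hs i t)"
        by (rule continuous_on_sum) (use ci in blast)
      then show "continuous_on {0..1} H" unfolding H
        by (intro continuous_on_add continuous_on_mult continuous_on_divide continuous_on_const continuous_on_id) (use n in auto)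
      show "strict_mono_on {0..1} H"
      proof (rule strict_mono_onI)
        fix r s :: real assume rs: "r \<in> {0..1}" "s \<in> {0..1}" "r < s"
        have "(\<Sum>i<n. hs i r) \<le> (\<Sum>i<n. hs i s)"
        proof (rule sum_mono)
          fix i assume "i \<in> {..<n}"
          then have "inM (hs i)" using hs tuples_inM by blast
          then show "hs i r \<le> hs i s" using inM_mono rs by auto
        qed
        then have "(1 - e) * (\<Sum>i<n. hs i r) / real n \<le> (1 - e) * (\<Sum>i<n. hs i s) / real n"
          using e by (intro divide_right_mono mult_left_mono) auto
        moreover have "e * r < e * s" using rs e by simp
        ultimately show "H r < H s" unfolding H by linarith
      qed
      have z: "\<And>i. i \<in> {..<n} \<Longrightarrow> hs i 0 = 0" and o: "\<And>i. i \<in> {..<n} \<Longrightarrow> hs i 1 = 1"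
        using hs inM_0 inM_1 tuples_inM by blast+
      have "(\<Sum>i<n. hs i 0) = 0" using z by simp
      then show "H 0 = 0" unfolding H by simp
      have "(\<Sum>i<n. hs i 1) = real n" using o by simp
      then show "H 1 = 1" unfolding H using n by simp
    qed
    have "F = (\<lambda>t. (1 - e) * (\<Sum>i<n. fs i t) / real n + e * t)" by (simp add: F_def[abs_def])
    note pf = props[OF fs this]
    have "G = (\<lambda>t. (1 - e) * (\<Sum>i<n. gs i t) / real n + e * t)" by (simp add: G_def[abs_def])
    note pg = props[OF gs this]
    define h where "h t = inv_into {0..1} F (G t)" for t
    define h' where "h' t = inv_into {0..1} G (F t)" for t
    have hp: "hpair h h'" unfolding h_def[abs_def] h'_def[abs_def]
      using pf pg by (intro hpair_comp) auto
    have bound: "supdist (rep h (fs i)) (gs i) \<le> 2 * real n * e" if i: "i < n" for i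
    proof (rule supdist_le)
      fix t :: real assume t: "t \<in> {0..1}"
      define s where "s = h t"
      have s: "s \<in> {0..1}" using hp t unfolding hpair_def s_def by auto
      have pf': "continuous_on {0..1} F" "strict_mono_on {0..1} F" "F 0 = 0" "F 1 = 1" using pf by auto
      have pg': "continuous_on {0..1} G" "strict_mono_on {0..1} G" "G 0 = 0" "G 1 = 1" using pg by auto
      have "G t \<in> G ` {0..1}" using t by blast
      then have Gt: "G t \<in> {0..1}" using homeo_F(1)[OF pg'] by simp
      have Fs: "F s = G t" unfolding s_def h_def using homeo_F(2)[OF pf' Gt] by blast
      define a where "a = (\<Sum>i<n. fs i s)"
      define b where "b = (\<Sum>i<n. gs i t)"
      have "(1 - e) * a / real n + e * s = (1 - e) * b / real n + e * t"
        using Fs unfolding F_def G_def a_def b_def .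
      moreover have "(1 - e) * (a - b) / real n = (1 - e) * a / real n - (1 - e) * b / real n"
        by (simp add: right_diff_distrib diff_divide_distrib)
      ultimately have "(1 - e) * (a - b) / real n = e * (t - s)" by (simp add: algebra_simps)
      moreover have "real n > 0" "1 - e > 0" using n e by auto
      ultimately have "a - b = real n * e * (t - s) / (1 - e)"
        by (simp add: field_simps)
      then have eq: "(\<Sum>i<n. fs i s) - (\<Sum>i<n. gs i t) = real n * e * (t - s) / (1 - e)"
        unfolding a_def b_def .
      have "\<bar>t - s\<bar> \<le> 1" using s t by auto
      have ne: "0 \<le> real n * e" using e by simp
      have "\<bar>real n * e * (t - s) / (1 - e)\<bar> = real n * e * \<bar>t - s\<bar> / (1 - e)"
        using e ne by (simp add: abs_mult abs_divide)
      also have "\<dots> \<le> real n * e * 1 / (1 - e)"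
        using e \<open>\<bar>t - s\<bar> \<le> 1\<close> ne by (intro divide_right_mono mult_left_mono) auto
      also have "\<dots> \<le> 2 * real n * e"
      proof -
        have "real n * e * 1 \<le> 2 * real n * e * (1 - e)"
          using e ne mult_left_mono[of 1 "2 * (1 - e)" "real n * e"] by (simp add: algebra_simps)
        then show ?thesis using e by (simp add: divide_le_eq)
      qed
      finally have "\<bar>real n * e * (t - s) / (1 - e)\<bar> \<le> 2 * real n * e" .
      then have sb: "\<bar>(\<Sum>i<n. fs i s) - (\<Sum>i<n. gs i t)\<bar> \<le> 2 * real n * e" using eq by simp
      obtain t3 where t3: "t3 \<in> {0..1}" "\<And>j. j < n \<Longrightarrow> fs j s = gs j t3"
        using im_point[OF im s] by blast
      have "\<bar>gs i t3 - gs i t\<bar> \<le> \<bar>(\<Sum>j<n. gs j t3) - (\<Sum>j<n. gs j t)\<bar>"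
        using cmp_bound[OF tuple_cmp[OF gs t3(1) t] i] .
      also have "(\<Sum>j<n. gs j t3) = (\<Sum>j<n. fs j s)" using t3 by simp
      finally have "\<bar>gs i t3 - gs i t\<bar> \<le> 2 * real n * e" using sb by linarith
      then show "\<bar>rep h (fs i) t - gs i t\<bar> \<le> 2 * real n * e"
        using t t3(2)[OF i] unfolding rep_def s_def by simp
    qed
    show ?thesis using hp bound by blast
  qed
  show ?thesis
  proof
    fix \<phi>
    show "tp n fs \<phi> = tp n gs \<phi>"
    proof (cases "fv \<phi> \<subseteq> {..<n}")
      case True
      have fsM: "\<forall>i\<in>fv \<phi>. fs i \<in> Mset" and gsM: "\<forall>i\<in>fv \<phi>. gs i \<in> Mset"
        using True fs gs by (auto simp: Mset_def tuples_def)
      have "eval \<phi> fs - eval \<phi> gs = 0"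
      proof (rule small_zero[of "lip \<phi> * (2 * real n)"])
        show "0 \<le> lip \<phi> * (2 * real n)" using lip_nonneg by simp
        fix e :: real assume e: "0 < e" "e \<le> 1/2"
        obtain h h' where hp: "hpair h h'" and b: "\<forall>i<n. supdist (rep h (fs i)) (gs i) \<le> 2 * real n * e"
          using approx[OF e] by blast
        have "eval \<phi> (\<lambda>i. rep h (fs i)) = eval \<phi> fs" using eval_rep[OF hp fsM] .
        moreover have "\<bar>eval \<phi> (\<lambda>i. rep h (fs i)) - eval \<phi> gs\<bar> \<le> lip \<phi> * (2 * real n * e)"
          using True b e fsM gsM rep_inM[OF hp] by (intro eval_lip) (auto simp: Mset_def)
        ultimately show "\<bar>eval \<phi> fs - eval \<phi> gs\<bar> \<le> lip \<phi> * (2 * real n) * e" by (simp add: mult.assoc)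
      qed
      then show ?thesis using True by (simp add: tp_def)
    qed (simp add: tp_def)
  qed
qed

lemma level:
  assumes f: "inM f" and x: "0 \<le> x" "x \<le> 1"
  obtains lo hi where "lo \<in> {0..1}" "hi \<in> {0..1}"
    "\<And>t. t \<in> {0..1} \<Longrightarrow> f t < x \<longleftrightarrow> t < lo"
    "\<And>t. t \<in> {0..1} \<Longrightarrow> x < f t \<longleftrightarrow> hi < t"
proof -
  have c: "continuous_on {0..1} f" using inM_cont[OF f] .
  define S where "S = {0..1} \<inter> f -` {x..}"
  define T where "T = {0..1} \<inter> f -` {..x}"
  have S1: "1 \<in> S" using x inM_1[OF f] by (auto simp: S_def)
  have T0: "0 \<in> T" using x inM_0[OF f] by (auto simp: T_def)
  have cS: "closed S" unfolding S_def by (rule continuous_closed_preimage[OF c]) auto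
  have cT: "closed T" unfolding T_def by (rule continuous_closed_preimage[OF c]) auto
  have bS: "bdd_below S" unfolding S_def by (rule bdd_belowI[of _ 0]) auto
  have bT: "bdd_above T" unfolding T_def by (rule bdd_aboveI[of _ 1]) auto
  define lo where "lo = Inf S"
  define hi where "hi = Sup T"
  have loS: "lo \<in> S" unfolding lo_def using closed_contains_Inf[OF _ bS cS] S1 by blast
  have hiT: "hi \<in> T" unfolding hi_def using closed_contains_Sup[OF _ bT cT] T0 by blast
  have lo01: "lo \<in> {0..1}" and flo: "x \<le> f lo" using loS by (auto simp: S_def)
  have hi01: "hi \<in> {0..1}" and fhi: "f hi \<le> x" using hiT by (auto simp: T_def)
  show ?thesis
  proof (rule that[OF lo01 hi01])
    fix t :: real assume t: "t \<in> {0..1}"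
    show "f t < x \<longleftrightarrow> t < lo"
    proof
      assume "f t < x"
      show "t < lo"
      proof (rule ccontr)
        assume "\<not> t < lo"
        then have "f lo \<le> f t" using inM_mono[OF f lo01 t] by simp
        then show False using flo \<open>f t < x\<close> by simp
      qed
    next
      assume "t < lo"
      show "f t < x"
      proof (rule ccontr)
        assume "\<not> f t < x"
        then have "t \<in> S" using t by (auto simp: S_def)
        then have "lo \<le> t" unfolding lo_def using cInf_lower[OF _ bS] by blast
        then show False using \<open>t < lo\<close> by simp
      qed
    qed
    show "x < f t \<longleftrightarrow> hi < t"
    proof
      assume "x < f t"
      show "hi < t"
      proof (rule ccontr)
        assume "\<not> hi < t"
        then have "f t \<le> f hi" using inM_mono[OF f t hi01] by simp
        then show False using fhi \<open>x < f t\<close> by simp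
      qed
    next
      assume "hi < t"
      show "x < f t"
      proof (rule ccontr)
        assume "\<not> x < f t"
        then have "t \<in> T" using t by (auto simp: T_def)
        then have "t \<le> hi" unfolding hi_def using cSup_upper[OF _ bT] by blast
        then show False using \<open>hi < t\<close> by simp
      qed
    qed
  qed
qed

definition W :: "(real \<Rightarrow> real) \<Rightarrow> (real \<Rightarrow> real) \<Rightarrow> real \<Rightarrow> real \<Rightarrow> bool" where
  "W f g a b \<longleftrightarrow> (\<exists>t\<in>{0..1}. a < f t \<and> g t < b)"

lemma im_char:
  assumes n: "n \<ge> 1" and fs: "fs \<in> tuples n"
  shows "im n fs = {pt n x | x. (\<forall>i<n. 0 \<le> x i \<and> x i \<le> 1) \<and> (\<forall>i<n. \<forall>j<n. \<not> W (fs i) (fs j) (x i) (x j))}"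
proof
  show "im n fs \<subseteq> {pt n x | x. (\<forall>i<n. 0 \<le> x i \<and> x i \<le> 1) \<and> (\<forall>i<n. \<forall>j<n. \<not> W (fs i) (fs j) (x i) (x j))}"
  proof
    fix p assume "p \<in> im n fs"
    then obtain t where t: "t \<in> {0..1}" "p = pt n (\<lambda>i. fs i t)" unfolding im_def by auto
    have r: "\<forall>i<n. 0 \<le> fs i t \<and> fs i t \<le> 1"
    proof (intro allI impI)
      fix i assume "i < n"
      show "0 \<le> fs i t \<and> fs i t \<le> 1" using inM_range[OF tuples_inM[OF fs \<open>i < n\<close>] t(1)] .
    qed
    have w: "\<forall>i<n. \<forall>j<n. \<not> W (fs i) (fs j) (fs i t) (fs j t)"
    proof (intro allI impI notI)
      fix i j assume ij: "i < n" "j < n" and "W (fs i) (fs j) (fs i t) (fs j t)"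
      then obtain s where s: "s \<in> {0..1}" "fs i t < fs i s" "fs j s < fs j t" unfolding W_def by auto
      have "\<not> s \<le> t" using inM_mono[OF tuples_inM[OF fs ij(1)] s(1) t(1)] s(2) by linarith
      moreover have "\<not> t \<le> s" using inM_mono[OF tuples_inM[OF fs ij(2)] t(1) s(1)] s(3) by linarith
      ultimately show False by linarith
    qed
    show "p \<in> {pt n x | x. (\<forall>i<n. 0 \<le> x i \<and> x i \<le> 1) \<and> (\<forall>i<n. \<forall>j<n. \<not> W (fs i) (fs j) (x i) (x j))}"
      using t(2) r w by blast
  qed
  show "{pt n x | x. (\<forall>i<n. 0 \<le> x i \<and> x i \<le> 1) \<and> (\<forall>i<n. \<forall>j<n. \<not> W (fs i) (fs j) (x i) (x j))} \<subseteq> im n fs"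
  proof
    fix p assume "p \<in> {pt n x | x. (\<forall>i<n. 0 \<le> x i \<and> x i \<le> 1) \<and> (\<forall>i<n. \<forall>j<n. \<not> W (fs i) (fs j) (x i) (x j))}"
    then obtain x where p: "p = pt n x" and r: "\<forall>i<n. 0 \<le> x i \<and> x i \<le> 1"
      and w: "\<forall>i<n. \<forall>j<n. \<not> W (fs i) (fs j) (x i) (x j)" by blast
    have "\<forall>i. \<exists>lh. i < n \<longrightarrow> (fst lh \<in> {0..1} \<and> snd lh \<in> {0..1} \<and>
      (\<forall>t\<in>{0..1}. fs i t < x i \<longleftrightarrow> t < fst lh) \<and> (\<forall>t\<in>{0..1}. x i < fs i t \<longleftrightarrow> snd lh < t))"
    proof
      fix i
      show "\<exists>lh. i < n \<longrightarrow> (fst lh \<in> {0..1} \<and> snd lh \<in> {0..1} \<and>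
        (\<forall>t\<in>{0..1}. fs i t < x i \<longleftrightarrow> t < fst lh) \<and> (\<forall>t\<in>{0..1}. x i < fs i t \<longleftrightarrow> snd lh < t))"
      proof (cases "i < n")
        case True
        obtain lo hi where "lo \<in> {0..1}" "hi \<in> {0..1}"
          "\<And>t. t \<in> {0..1} \<Longrightarrow> fs i t < x i \<longleftrightarrow> t < lo"
          "\<And>t. t \<in> {0..1} \<Longrightarrow> x i < fs i t \<longleftrightarrow> hi < t"
          using level[OF tuples_inM[OF fs True]] r True by blast
        then show ?thesis by (intro exI[of _ "(lo, hi)"]) auto
      qed auto
    qed
    then obtain LH where LH: "\<And>i. i < n \<Longrightarrow> fst (LH i) \<in> {0..1} \<and> snd (LH i) \<in> {0..1} \<and>
      (\<forall>t\<in>{0..1}. fs i t < x i \<longleftrightarrow> t < fst (LH i)) \<and> (\<forall>t\<in>{0..1}. x i < fs i t \<longleftrightarrow> snd (LH i) < t)"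
      by metis
    define lo where "lo i = fst (LH i)" for i
    define hi where "hi i = snd (LH i)" for i
    have L: "\<And>i. i < n \<Longrightarrow> lo i \<in> {0..1} \<and> hi i \<in> {0..1} \<and>
      (\<forall>t\<in>{0..1}. fs i t < x i \<longleftrightarrow> t < lo i) \<and> (\<forall>t\<in>{0..1}. x i < fs i t \<longleftrightarrow> hi i < t)"
      using LH unfolding lo_def hi_def by blast
    define ts where "ts = Max (lo ` {..<n})"
    have "0 \<in> {..<n}" using n by simp
    then have fin: "finite (lo ` {..<n})" "lo ` {..<n} \<noteq> {}" by auto
    obtain k where k: "k < n" "ts = lo k" using Max_in[OF fin] unfolding ts_def by auto
    have ts01: "ts \<in> {0..1}" using L[OF k(1)] k(2) by simp
    have "\<forall>j<n. fs j ts = x j"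
    proof (intro allI impI)
      fix j assume j: "j < n"
      have "lo j \<le> ts" unfolding ts_def using fin j by (intro Max_ge) auto
      then have ge: "\<not> fs j ts < x j" using L[OF j] ts01 by auto
      have "\<not> x j < fs j ts"
      proof
        assume "x j < fs j ts"
        then have hts: "hi j < ts" using L[OF j] ts01 by auto
        define s where "s = (hi j + ts) / 2"
        have s01: "s \<in> {0..1}" using L[OF j] ts01 hts by (auto simp: s_def)
        have "x j < fs j s" using L[OF j] s01 hts by (auto simp: s_def)
        moreover have "fs k s < x k" using L[OF k(1)] s01 hts k(2) by (auto simp: s_def)
        ultimately have "W (fs j) (fs k) (x j) (x k)" unfolding W_def using s01 by blast
        then show False using w j k(1) by blast
      qed
      then show "fs j ts = x j" using ge by linarith
    qed
    then have "p = pt n (\<lambda>i. fs i ts)" unfolding p pt_def by auto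
    then show "p \<in> im n fs" unfolding im_def using ts01 by blast
  qed
qed

lemma W_y:
  assumes f: "inM f" and g: "inM g" and ab: "0 \<le> a" "0 \<le> b" and c: "0 < c" "a + c \<le> 1" "b + c \<le> 1"
  shows "W f g a b \<longleftrightarrow> (\<exists>y\<in>Mset. a < phiM (a + c) f y \<and> phiM (b + c) g y < b)"
proof
  assume "W f g a b"
  then obtain t where t: "t \<in> {0..1}" "a < f t" "g t < b" unfolding W_def by auto
  have "g t \<ge> 0" using inM_range[OF g t(1)] by simp
  then have "b > 0" using t by simp
  then have c1: "c < 1" using c by simp
  have "t \<noteq> 1" using t(3) inM_1[OF g] c ab by auto
  then have t1: "t < 1" using t(1) by simp
  obtain d where d: "d > 0" "\<And>s. s \<in> {0..1} \<Longrightarrow> dist s t < d \<Longrightarrow> dist (g s) (g t) < b - g t"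
    using inM_cont[OF g] t unfolding continuous_on_iff by (metis diff_gt_0_iff_gt)
  define t2 where "t2 = t + min (d / 2) (1 - t)"
  have t2: "t < t2" "t2 \<le> 1" "dist t2 t < d" using d t1 by (auto simp: t2_def dist_real_def)
  have t201: "t2 \<in> {0..1}" using t2 t by auto
  have gt2: "g t2 < b" using d(2)[OF t201 t2(3)] by (auto simp: dist_real_def)
  define y where "y s = max 0 (min 1 ((s - t) / (t2 - t)))" for s
  have yM: "y \<in> Mset" unfolding Mset_def inM_def
  proof (intro CollectI conjI)
    show "continuous_on {0..1} y" unfolding y_def[abs_def] using t2 by (intro continuous_intros) auto
    show "mono_on {0..1} y"
    proof (rule mono_onI)
      fix r s :: real assume "r \<le> s"
      then have "(r - t) / (t2 - t) \<le> (s - t) / (t2 - t)" using t2 by (intro divide_right_mono) auto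
      then show "y r \<le> y s" unfolding y_def by linarith
    qed
    have "(0 - t) / (t2 - t) \<le> 0" using t t2 by (intro divide_nonpos_pos) auto
    then show "y 0 = 0" unfolding y_def by linarith
    have "1 \<le> (1 - t) / (t2 - t)" using t2 by (simp add: le_divide_eq)
    then show "y 1 = 1" unfolding y_def by simp
  qed
  have "y t = 0" "y t2 = 1" unfolding y_def using t2 by auto
  have inMy: "inM y" using yM by (simp add: Mset_def)
  have "a < phiM (a + c) f y" using phi_gt[OF f inMy, of "a + c" a] c ab t \<open>y t = 0\<close> by auto
  moreover have "phiM (b + c) g y < b"
    using phi_lt[OF g inMy, of "b + c" b] c ab t201 gt2 \<open>y t2 = 1\<close> c1 by auto
  ultimately show "\<exists>y\<in>Mset. a < phiM (a + c) f y \<and> phiM (b + c) g y < b" using yM by blast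
next
  assume "\<exists>y\<in>Mset. a < phiM (a + c) f y \<and> phiM (b + c) g y < b"
  then obtain y where y: "inM y" "a < phiM (a + c) f y" "phiM (b + c) g y < b" by (auto simp: Mset_def)
  obtain t1 where t1: "t1 \<in> {0..1}" "a < f t1" "y t1 < c"
    using y(2) phi_gt[OF f y(1), of "a + c" a] ab c by auto
  obtain t2 where t2: "t2 \<in> {0..1}" "g t2 < b" "c < y t2"
    using y(3) phi_lt[OF g y(1), of "b + c" b] ab c by auto
  have "\<not> t2 \<le> t1" using inM_mono[OF y(1) t2(1) t1(1)] t1 t2 by linarith
  then have "f t1 \<le> f t2" using inM_mono[OF f t1(1) t2(1)] by simp
  then show "W f g a b" unfolding W_def using t1 t2 by (intro bexI[of _ t2]) auto
qed

definition KC :: "nat \<Rightarrow> rat \<Rightarrow> form" where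
  "KC i q = (if q \<le> 1/2 then Atm (2 * q) i i else Neg (Atm (2 - 2 * q) i i))"

definition MinF :: "form \<Rightarrow> form \<Rightarrow> form" where
  "MinF p q = Minus p (Minus p q)"

definition Fm :: "nat \<Rightarrow> nat \<Rightarrow> rat \<Rightarrow> rat \<Rightarrow> rat \<Rightarrow> nat \<Rightarrow> form" where
  "Fm i j qa qb qc y = SupQ y (MinF (Minus (Atm (qa + qc) i y) (KC i qa)) (Minus (KC i qb) (Atm (qb + qc) j y)))"

lemma fv_KC: "fv (KC i q) = {i}" unfolding KC_def by auto

lemma eval_KC:
  assumes "inM (e i)" "0 \<le> q" "q \<le> 1"
  shows "eval (KC i q) e = real_of_rat q"
proof (cases "q \<le> 1/2")
  case True
  have a: "0 \<le> real_of_rat (2 * q)" "real_of_rat (2 * q) \<le> 1"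
    using True assms(2) by (simp_all add: of_rat_mult)
      (metis True mult.commute of_rat_1 of_rat_less_eq of_rat_mult le_divide_eq_numeral1(1) of_rat_numeral_eq)
  obtain t where t: "t \<in> {0..1}" "e i t + e i t = real_of_rat (2 * q)" "phiM (real_of_rat (2 * q)) (e i) (e i) = e i t"
    using phi_point[OF assms(1) assms(1) a] .
  have "e i t = real_of_rat q" using t(2) by (simp add: of_rat_mult)
  then show ?thesis using True assms t by (simp add: KC_def)
next
  case False
  have a: "0 \<le> real_of_rat (2 - 2 * q)" "real_of_rat (2 - 2 * q) \<le> 1"
  proof -
    have "0 \<le> 2 - 2 * q" "2 - 2 * q \<le> 1" using False assms by auto
    then show "0 \<le> real_of_rat (2 - 2 * q)" "real_of_rat (2 - 2 * q) \<le> 1"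
      by (metis of_rat_0 of_rat_less_eq, metis of_rat_1 of_rat_less_eq)
  qed
  obtain t where t: "t \<in> {0..1}" "e i t + e i t = real_of_rat (2 - 2 * q)" "phiM (real_of_rat (2 - 2 * q)) (e i) (e i) = e i t"
    using phi_point[OF assms(1) assms(1) a] .
  have "e i t = 1 - real_of_rat q" using t(2) by (simp add: of_rat_mult of_rat_diff)
  moreover have "0 \<le> 2 - 2 * q" "2 - 2 * q \<le> 1" using False assms by auto
  ultimately show ?thesis using False assms t by (simp add: KC_def)
qed

lemma fv_Fm: "i \<noteq> y \<Longrightarrow> j \<noteq> y \<Longrightarrow> fv (Fm i j qa qb qc y) = {i, j}"
  unfolding Fm_def MinF_def by (auto simp: fv_KC)

lemma pos_min_aux:
  fixes P Q :: real
  assumes "0 \<le> P" "0 \<le> Q"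
  shows "0 < max (P - max (P - Q) 0) 0 \<longleftrightarrow> 0 < P \<and> 0 < Q"
  using assms by (auto simp: max_def)

lemma eval_Fm:
  assumes fs: "fs \<in> tuples n" and ij: "i < n" "j < n"
    and q: "0 \<le> qa" "0 \<le> qb" "0 < qc" "qa + qc \<le> 1" "qb + qc \<le> 1"
  shows "0 < eval (Fm i j qa qb qc n) fs \<longleftrightarrow> W (fs i) (fs j) (real_of_rat qa) (real_of_rat qb)"
proof -
  define a where "a = real_of_rat qa"
  define b where "b = real_of_rat qb"
  define c where "c = real_of_rat qc"
  have r: "0 \<le> a" "0 \<le> b" "0 < c" "a + c \<le> 1" "b + c \<le> 1"
    using q unfolding a_def b_def c_def
    by (simp_all add: of_rat_add[symmetric])
  have fi: "inM (fs i)" and fj: "inM (fs j)" using fs ij tuples_inM by blast+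
  have qa1: "qa \<le> 1" "qb \<le> 1" using q by auto
  have i': "i \<noteq> n" "j \<noteq> n" using ij by auto
  define inner where "inner = MinF (Minus (Atm (qa + qc) i n) (KC i qa)) (Minus (KC i qb) (Atm (qb + qc) j n))"
  define V where "V g = eval inner (fs(n := g))" for g
  have V: "V g = max (max (phiM (a + c) (fs i) g - a) 0 -
        max (max (phiM (a + c) (fs i) g - a) 0 - max (b - phiM (b + c) (fs j) g) 0) 0) 0"
    if g: "g \<in> Mset" for g
  proof -
    have "0 \<le> qa + qc" "0 \<le> qb + qc" using q by auto
    then show ?thesis
      unfolding V_def inner_def MinF_def using i' q qa1 eval_KC[of "fs(n := g)" i qa] eval_KC[of "fs(n := g)" i qb] fi
      by (simp add: a_def b_def c_def of_rat_add)
  qed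
  have Vpos: "0 < V g \<longleftrightarrow> a < phiM (a + c) (fs i) g \<and> phiM (b + c) (fs j) g < b" if g: "g \<in> Mset" for g
    unfolding V[OF g] by (subst pos_min_aux) auto
  have fvi: "fv inner \<subseteq> {i, j, n}" unfolding inner_def MinF_def by (auto simp: fv_KC)
  have Vb: "V g \<le> 1" if g: "g \<in> Mset" for g
  proof -
    have "\<forall>k\<in>fv inner. (fs(n := g)) k \<in> Mset"
    proof
      fix k assume "k \<in> fv inner"
      then have "k = i \<or> k = j \<or> k = n" using fvi by auto
      then show "(fs(n := g)) k \<in> Mset" using g fi fj i' by (auto simp: Mset_def)
    qed
    then show ?thesis unfolding V_def using eval01[of inner "fs(n := g)"] by blast
  qed
  have bdd: "bdd_above (V ` Mset)" using Vb by (intro bdd_aboveI2) auto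
  have "eval (Fm i j qa qb qc n) fs = (SUP g\<in>Mset. V g)"
    unfolding Fm_def V_def inner_def by simp
  then have "0 < eval (Fm i j qa qb qc n) fs \<longleftrightarrow> (\<exists>g\<in>Mset. 0 < V g)"
    using less_cSUP_iff[OF Mset_ne bdd] by simp
  also have "\<dots> \<longleftrightarrow> (\<exists>g\<in>Mset. a < phiM (a + c) (fs i) g \<and> phiM (b + c) (fs j) g < b)"
    using Vpos by blast
  also have "\<dots> \<longleftrightarrow> W (fs i) (fs j) a b"
    using W_y[OF fi fj r] by simp
  finally show ?thesis unfolding a_def b_def .
qed

lemma W_transfer:
  assumes fs: "fs \<in> tuples n" and gs: "gs \<in> tuples n" and tp: "tp n fs = tp n gs"
    and ij: "i < n" "j < n" and ab: "0 \<le> a" "b \<le> 1"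
    and w: "W (fs i) (fs j) a b"
  shows "W (gs i) (gs j) a b"
proof -
  obtain t where t: "t \<in> {0..1}" "a < fs i t" "fs j t < b" using w unfolding W_def by auto
  have fi: "inM (fs i)" and fj: "inM (fs j)" using fs ij tuples_inM by blast+
  have ri: "fs i t \<le> 1" and rj: "0 \<le> fs j t" using inM_range[OF fi t(1)] inM_range[OF fj t(1)] by auto
  obtain ra where ra: "ra \<in> \<rat>" "a < ra" "ra < fs i t" using Rats_dense_in_real[OF t(2)] by blast
  obtain rb where rb: "rb \<in> \<rat>" "fs j t < rb" "rb < b" using Rats_dense_in_real[OF t(3)] by blast
  obtain qa where qa: "ra = real_of_rat qa" using ra(1) Rats_cases by blast
  obtain qb where qb: "rb = real_of_rat qb" using rb(1) Rats_cases by blast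
  have qa0: "0 \<le> qa" using ra ab qa by (metis le_less_trans less_eq_real_def of_rat_0 of_rat_less_eq)
  have qb0: "0 \<le> qb" using rb rj qb by (metis le_less_trans less_eq_real_def of_rat_0 of_rat_less_eq)
  have qa1: "qa < 1" using ra ri qa by (metis less_le_trans of_rat_1 of_rat_less)
  have qb1: "qb < 1" using rb ab qb by (metis less_le_trans of_rat_1 of_rat_less)
  define qc where "qc = (1 - max qa qb) / 2"
  have qc: "0 < qc" "qa + qc \<le> 1" "qb + qc \<le> 1" using qa1 qb1 unfolding qc_def by (auto simp: max_def field_simps)
  have wf: "W (fs i) (fs j) (real_of_rat qa) (real_of_rat qb)"
    unfolding W_def using t ra rb qa qb by blast
  have fvF: "fv (Fm i j qa qb qc n) \<subseteq> {..<n}" using ij by (subst fv_Fm) auto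
  have "eval (Fm i j qa qb qc n) fs = eval (Fm i j qa qb qc n) gs"
    using fun_cong[OF tp, of "Fm i j qa qb qc n"] fvF by (simp add: tp_def)
  then have "W (gs i) (gs j) (real_of_rat qa) (real_of_rat qb)"
    using eval_Fm[OF fs ij qa0 qb0 qc] eval_Fm[OF gs ij qa0 qb0 qc] wf by simp
  then show ?thesis unfolding W_def using ra rb qa qb by force
qed

lemma im_of_tp:
  assumes n: "n \<ge> 1" and fs: "fs \<in> tuples n" and gs: "gs \<in> tuples n" and tp: "tp n fs = tp n gs"
  shows "im n fs = im n gs"
proof -
  have "\<And>x. (\<forall>i<n. 0 \<le> x i \<and> x i \<le> 1) \<Longrightarrow>
     (\<forall>i<n. \<forall>j<n. \<not> W (fs i) (fs j) (x i) (x j)) \<longleftrightarrow> (\<forall>i<n. \<forall>j<n. \<not> W (gs i) (gs j) (x i) (x j))"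
    using W_transfer[OF fs gs tp] W_transfer[OF gs fs tp[symmetric]] by meson
  then show ?thesis unfolding im_char[OF n fs] im_char[OF n gs] by blast
qed

lemma pt_cube: "x \<in> cube n \<Longrightarrow> pt n x = x"
  unfolding cube_def pt_def by (auto intro!: ext)

lemma cle_pt: "cle n (pt n x) (pt n y) \<longleftrightarrow> cle n x y"
  unfolding cle_def pt_def by auto

lemma im_image: "im n fs = (\<lambda>t. pt n (\<lambda>i. fs i t)) ` {0..1}"
  unfolding im_def by auto

lemma cont_pt:
  assumes fs: "fs \<in> tuples n"
  shows "continuous_on {0..1} (\<lambda>t. pt n (\<lambda>i. fs i t))"
proof (rule continuous_on_coordinatewise_then_product)
  fix k
  have "continuous_on {0..1} (\<lambda>t. if k < n then fs k t else 0)"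
  proof (cases "k < n")
    case True
    have "continuous_on {0..1} (fs k)" using inM_cont[OF tuples_inM[OF fs True]] .
    then show ?thesis using True by simp
  next
    case False
    then show ?thesis by simp
  qed
  then show "continuous_on {0..1} (\<lambda>t. pt n (\<lambda>i. fs i t) k)" unfolding pt_def .
qed
lemma im_conn:
  assumes n: "n \<ge> 1" and fs: "fs \<in> tuples n"
  shows "im n fs \<in> conn_chains n"
proof -
  have sub: "im n fs \<subseteq> cube n"
  proof
    fix p assume "p \<in> im n fs"
    then obtain t where t: "t \<in> {0..1}" "p = pt n (\<lambda>i. fs i t)" unfolding im_def by auto
    have "\<forall>i<n. 0 \<le> fs i t \<and> fs i t \<le> 1"
    proof (intro allI impI)
      fix i assume "i < n"
      show "0 \<le> fs i t \<and> fs i t \<le> 1" using inM_range[OF tuples_inM[OF fs \<open>i < n\<close>] t(1)] .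
    qed
    then show "p \<in> cube n" unfolding t(2) cube_def pt_def by auto
  qed
  have ch: "\<forall>x\<in>im n fs. \<forall>y\<in>im n fs. cle n x y \<or> cle n y x"
  proof (intro ballI)
    fix x y assume "x \<in> im n fs" "y \<in> im n fs"
    then obtain s t where "s \<in> {0..1}" "t \<in> {0..1}" "x = pt n (\<lambda>i. fs i s)" "y = pt n (\<lambda>i. fs i t)"
      unfolding im_def by blast
    then show "cle n x y \<or> cle n y x" using tuple_cmp[OF fs] cle_pt by metis
  qed
  have z: "pt n (\<lambda>_. 0) \<in> im n fs"
  proof -
    have "pt n (\<lambda>i. fs i 0) = pt n (\<lambda>_. 0)"
    proof (rule ext)
      fix i show "pt n (\<lambda>i. fs i 0) i = pt n (\<lambda>_. 0) i"
      proof (cases "i < n")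
        case True then show ?thesis unfolding pt_def using inM_0[OF tuples_inM[OF fs True]] by simp
      qed (simp add: pt_def)
    qed
    then show ?thesis unfolding im_def mem_Collect_eq by (intro exI[of _ "0::real"]) simp
  qed
  have o: "pt n (\<lambda>_. 1) \<in> im n fs"
  proof -
    have "pt n (\<lambda>i. fs i 1) = pt n (\<lambda>_. 1)"
    proof (rule ext)
      fix i show "pt n (\<lambda>i. fs i 1) i = pt n (\<lambda>_. 1) i"
      proof (cases "i < n")
        case True then show ?thesis unfolding pt_def using inM_1[OF tuples_inM[OF fs True]] by simp
      qed (simp add: pt_def)
    qed
    then show ?thesis unfolding im_def mem_Collect_eq by (intro exI[of _ "1::real"]) simp
  qed
  have "continuous_on {0..1} (\<lambda>t. pt n (\<lambda>i. fs i t))" by (rule cont_pt[OF fs])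
  then have "connected (im n fs)" unfolding im_image by (rule connected_continuous_image) simp
  then show ?thesis unfolding conn_chains_def is_chain01_def mem_Collect_eq
    using sub ch z o by (intro conjI)
qed

lemma cle_sum_eq:
  assumes "cle n x y" "(\<Sum>i<n. x i) = (\<Sum>i<n. y i)" "x \<in> cube n" "y \<in> cube n"
  shows "x = y"
proof (rule ext)
  fix i
  show "x i = y i"
  proof (cases "i < n")
    case True
    have "(\<Sum>k<n. y k - x k) = 0" using assms(2) by (simp add: sum_subtractf)
    moreover have "\<forall>k\<in>{..<n}. 0 \<le> y k - x k" using assms(1) by (auto simp: cle_def)
    ultimately have "\<forall>k\<in>{..<n}. y k - x k = 0" using sum_nonneg_eq_0_iff[of "{..<n}" "\<lambda>k. y k - x k"] by simp
    then show ?thesis using True by auto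
  next
    case False
    then show ?thesis using assms(3,4) by (auto simp: cube_def)
  qed
qed

lemma conn_surj:
  assumes n: "n \<ge> 1" and C: "C \<in> conn_chains n"
  shows "\<exists>fs\<in>tuples n. im n fs = C"
proof -
  have sub: "C \<subseteq> cube n" and ch: "\<forall>x\<in>C. \<forall>y\<in>C. cle n x y \<or> cle n y x"
    and z: "pt n (\<lambda>_. 0) \<in> C" and o1: "pt n (\<lambda>_. 1) \<in> C" and con: "connected C"
    using C unfolding conn_chains_def is_chain01_def by auto
  define sg where "sg x = (\<Sum>i<n. x i) / real n" for x :: "nat \<Rightarrow> real"
  have npos: "real n > 0" using n by simp
  have "continuous_on UNIV (\<lambda>x::nat\<Rightarrow>real. \<Sum>i<n. x i)"
    by (intro continuous_on_sum) simp
  then have "continuous_on C (\<lambda>x::nat\<Rightarrow>real. \<Sum>i<n. x i)" by (rule continuous_on_subset) simp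
  then have csg: "continuous_on C sg" unfolding sg_def
    by (intro continuous_on_divide continuous_on_const) (use npos in auto)
  have sg0: "sg (pt n (\<lambda>_. 0)) = 0" unfolding sg_def pt_def by simp
  have sg1: "sg (pt n (\<lambda>_. 1)) = 1" unfolding sg_def pt_def using npos by simp
  have "connected (sg ` C)" by (rule connected_continuous_image[OF csg con])
  then have Icc: "{0..1} \<subseteq> sg ` C"
  proof -
    have "0 \<in> sg ` C" "1 \<in> sg ` C" using z o1 sg0 sg1 by (metis imageI)+
    then show ?thesis using connected_contains_Icc[of "sg ` C" 0 1] \<open>connected (sg ` C)\<close> by blast
  qed
  have inj: "x = y" if "x \<in> C" "y \<in> C" "sg x = sg y" for x y
  proof -
    have "(\<Sum>i<n. x i) = (\<Sum>i<n. y i)" using that(3) npos unfolding sg_def by simp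
    moreover have "x \<in> cube n" "y \<in> cube n" using that sub by auto
    moreover have "cle n x y \<or> cle n y x" using ch that by blast
    ultimately show ?thesis using cle_sum_eq[of n x y] cle_sum_eq[of n y x] by auto
  qed
  define c where "c t = (THE x. x \<in> C \<and> sg x = t)" for t
  have cC: "c t \<in> C \<and> sg (c t) = t" if t: "t \<in> {0..1}" for t
  proof -
    obtain x where x: "x \<in> C" "sg x = t" using Icc t by auto
    show ?thesis unfolding c_def by (rule theI[of _ x]) (use x inj in auto)
  qed
  have c_eq: "c (sg x) = x" if "x \<in> C" for x
  proof -
    have "x \<in> cube n" using that sub by auto
    then have xr: "\<forall>i<n. 0 \<le> x i \<and> x i \<le> 1" by (simp add: cube_def)
    have "0 \<le> (\<Sum>i<n. x i)" using xr by (intro sum_nonneg) auto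
    moreover have "(\<Sum>i<n. x i) \<le> (\<Sum>i<n. 1)" using xr by (intro sum_mono) auto
    ultimately have "0 \<le> (\<Sum>i<n. x i)" "(\<Sum>i<n. x i) \<le> real n" by auto
    then have "sg x \<in> {0..1}" unfolding sg_def using npos by (auto simp: divide_le_eq)
    then show ?thesis using cC[of "sg x"] inj that by blast
  qed
  define fs where "fs i t = c t i" for i t
  have sumc: "(\<Sum>j<n. c t j) = real n * t" if "t \<in> {0..1}" for t
    using cC[OF that] npos unfolding sg_def by (simp add: field_simps)
  have lipc: "\<bar>c s i - c t i\<bar> \<le> real n * \<bar>s - t\<bar>" if "s \<in> {0..1}" "t \<in> {0..1}" "i < n" for s t i
  proof -
    have "\<bar>c s i - c t i\<bar> \<le> \<bar>(\<Sum>j<n. c s j) - (\<Sum>j<n. c t j)\<bar>"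
    proof -
      have "c s \<in> C" "c t \<in> C" using cC that by auto
      then have "cle n (c s) (c t) \<or> cle n (c t) (c s)" using ch by blast
      then show ?thesis by (rule cmp_bound[OF _ that(3)])
    qed
    also have "\<dots> = real n * \<bar>s - t\<bar>" using sumc that npos by (simp add: abs_mult right_diff_distrib[symmetric])
    finally show ?thesis .
  qed
  have monoc: "c s i \<le> c t i" if "s \<in> {0..1}" "t \<in> {0..1}" "s \<le> t" "i < n" for s t i
  proof -
    have "cle n (c s) (c t) \<or> cle n (c t) (c s)" using ch cC that by blast
    then show ?thesis
    proof
      assume "cle n (c s) (c t)" then show ?thesis using that by (auto simp: cle_def)
    next
      assume a: "cle n (c t) (c s)"
      then have "(\<Sum>j<n. c t j) \<le> (\<Sum>j<n. c s j)" by (intro sum_mono) (auto simp: cle_def)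
      then have "t \<le> s" using sumc that npos by simp
      then show ?thesis using that by simp
    qed
  qed
  have c0: "c 0 = pt n (\<lambda>_. 0)" using c_eq[OF z] sg0 by simp
  have c1: "c 1 = pt n (\<lambda>_. 1)" using c_eq[OF o1] sg1 by simp
  have fsT: "fs \<in> tuples n" unfolding tuples_def
  proof (intro CollectI allI impI)
    fix i assume i: "i < n"
    show "inM (fs i)" unfolding inM_def
    proof (intro conjI)
      show "continuous_on {0..1} (fs i)" unfolding continuous_on_iff
      proof (intro ballI allI impI)
        fix t e :: real assume t: "t \<in> {0..1}" and e: "0 < e"
        show "\<exists>d>0. \<forall>x'\<in>{0..1}. dist x' t < d \<longrightarrow> dist (fs i x') (fs i t) < e"
        proof (intro exI[of _ "e / real n"] conjI ballI impI)
          show "0 < e / real n" using e npos by simp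
          fix s assume s: "s \<in> {0..1}" "dist s t < e / real n"
          have "\<bar>c s i - c t i\<bar> \<le> real n * \<bar>s - t\<bar>" using lipc[OF s(1) t i] .
          also have "\<dots> < real n * (e / real n)" using s(2) npos by (intro mult_strict_left_mono) (auto simp: dist_real_def)
          also have "\<dots> = e" using npos by simp
          finally show "dist (fs i s) (fs i t) < e" by (simp add: fs_def dist_real_def)
        qed
      qed
      show "mono_on {0..1} (fs i)" unfolding fs_def using monoc i by (auto simp: mono_on_def)
      show "fs i 0 = 0" unfolding fs_def c0 pt_def using i by simp
      show "fs i 1 = 1" unfolding fs_def c1 pt_def using i by simp
    qed
  qed
  have "im n fs = C"
  proof
    show "im n fs \<subseteq> C"
    proof
      fix p assume "p \<in> im n fs"
      then obtain t where t: "t \<in> {0..1}" "p = pt n (\<lambda>i. fs i t)" unfolding im_def by auto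
      have "(\<lambda>i. fs i t) = c t" unfolding fs_def by simp
      then have "p = c t" using t pt_cube[of "c t" n] cC[OF t(1)] sub by auto
      then show "p \<in> C" using cC[OF t(1)] by simp
    qed
    show "C \<subseteq> im n fs"
    proof
      fix x assume x: "x \<in> C"
      have "x \<in> cube n" using x sub by auto
      then have xr: "\<forall>i<n. 0 \<le> x i \<and> x i \<le> 1" by (simp add: cube_def)
    have "0 \<le> (\<Sum>i<n. x i)" using xr by (intro sum_nonneg) auto
    moreover have "(\<Sum>i<n. x i) \<le> (\<Sum>i<n. 1)" using xr by (intro sum_mono) auto
    ultimately have "0 \<le> (\<Sum>i<n. x i)" "(\<Sum>i<n. x i) \<le> real n" by auto
      then have s01: "sg x \<in> {0..1}" unfolding sg_def using npos by (auto simp: divide_le_eq)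
      have "pt n (\<lambda>i. fs i (sg x)) = x" unfolding fs_def using c_eq[OF x] pt_cube \<open>x \<in> cube n\<close> by simp
      then show "x \<in> im n fs" unfolding im_def mem_Collect_eq using s01 by (intro exI[of _ "sg x"]) simp
    qed
  qed
  then show ?thesis using fsT by (intro bexI[of _ fs])
qed

lemma fin_lessThan: "n \<ge> 1 \<Longrightarrow> finite ((f::nat \<Rightarrow> real) ` {..<n}) \<and> f ` {..<n} \<noteq> {}"
proof -
  assume "n \<ge> 1"
  then have "0 \<in> {..<n}" by simp
  then show ?thesis by blast
qed

lemma Max_img_mono:
  fixes f g :: "nat \<Rightarrow> real"
  assumes n: "n \<ge> 1" and le: "\<And>i. i < n \<Longrightarrow> f i \<le> g i"
  shows "Max (f ` {..<n}) \<le> Max (g ` {..<n})"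
proof -
  have F: "finite (f ` {..<n})" "f ` {..<n} \<noteq> {}" and G: "finite (g ` {..<n})" "g ` {..<n} \<noteq> {}"
    using fin_lessThan[OF n] by auto
  show ?thesis
  proof (subst Max_le_iff[OF F], intro ballI)
    fix y assume "y \<in> f ` {..<n}"
    then obtain i where i: "i < n" "y = f i" by auto
    have "g i \<le> Max (g ` {..<n})" using G i by (intro Max_ge) auto
    then show "y \<le> Max (g ` {..<n})" using le[OF i(1)] i by linarith
  qed
qed

lemma Max_img_ge:
  fixes f :: "nat \<Rightarrow> real"
  assumes "i < n"
  shows "f i \<le> Max (f ` {..<n})"
  using assms by (intro Max_ge) auto

lemma cont_Max:
  fixes f :: "nat \<Rightarrow> real \<Rightarrow> real"
  assumes "finite I" "I \<noteq> {}" "\<And>i. i \<in> I \<Longrightarrow> continuous_on S (f i)"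
  shows "continuous_on S (\<lambda>x. Max ((\<lambda>i. f i x) ` I))"
  using assms
proof (induction I rule: finite_ne_induct)
  case (singleton x)
  then show ?case by simp
next
  case (insert a I)
  have eq: "(\<lambda>x. Max ((\<lambda>i. f i x) ` insert a I)) = (\<lambda>x. max (f a x) (Max ((\<lambda>i. f i x) ` I)))"
    using insert by (simp add: Max_insert)
  show ?case unfolding eq using insert by (intro continuous_on_max) auto
qed

lemma coupling:
  assumes n: "n \<ge> 1" and fs: "fs \<in> tuples n" and gs: "gs \<in> tuples n"
    and d: "0 < d" and eta: "0 < \<eta>"
    and H: "\<And>s. s \<in> {0..1} \<Longrightarrow> \<exists>r\<in>{0..1}. \<forall>i<n. \<bar>fs i s - gs i r\<bar> < d"
  shows "\<exists>fs' gs'. fs' \<in> tuples n \<and> gs' \<in> tuples n \<and> im n fs' = im n fs \<and> im n gs' = im n gs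
     \<and> (\<forall>i<n. supdist (fs' i) (gs' i) \<le> d + \<eta>)"
proof -
  have fi: "\<And>i. i < n \<Longrightarrow> inM (fs i)" and gi: "\<And>i. i < n \<Longrightarrow> inM (gs i)"
    using fs gs tuples_inM by blast+
  define A where "A s r = Max ((\<lambda>i. fs i s - gs i r) ` {..<n})" for s r
  define B where "B s r = Max ((\<lambda>i. gs i r - fs i s) ` {..<n})" for s r
  define Phi where "Phi s r = max (A s r) d - max (B s r) d + \<eta> * (s - r)" for s r
  have Amono: "A s r \<le> A s' r'" if "s \<in> {0..1}" "s' \<in> {0..1}" "r \<in> {0..1}" "r' \<in> {0..1}" "s \<le> s'" "r' \<le> r" for s s' r r'
    unfolding A_def
  proof (rule Max_img_mono[OF n])
    fix i assume i: "i < n"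
    show "fs i s - gs i r \<le> fs i s' - gs i r'"
      using inM_mono[OF fi[OF i] that(1,2,5)] inM_mono[OF gi[OF i] that(4,3,6)] by linarith
  qed
  have Bmono: "B s' r' \<le> B s r" if "s \<in> {0..1}" "s' \<in> {0..1}" "r \<in> {0..1}" "r' \<in> {0..1}" "s \<le> s'" "r' \<le> r" for s s' r r'
    unfolding B_def
  proof (rule Max_img_mono[OF n])
    fix i assume i: "i < n"
    show "gs i r' - fs i s' \<le> gs i r - fs i s"
      using inM_mono[OF fi[OF i] that(1,2,5)] inM_mono[OF gi[OF i] that(4,3,6)] by linarith
  qed
  have Phistrict: "Phi s r < Phi s' r'" if "s \<in> {0..1}" "s' \<in> {0..1}" "r \<in> {0..1}" "r' \<in> {0..1}" "s < s'" "r' \<le> r" for s s' r r'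
  proof -
    have le: "s \<le> s'" using that(5) by simp
    have "A s r \<le> A s' r'" "B s' r' \<le> B s r"
      using Amono[OF that(1-4) le that(6)] Bmono[OF that(1-4) le that(6)] by auto
    then have "max (A s r) d \<le> max (A s' r') d" "max (B s' r') d \<le> max (B s r) d" by auto
    moreover have "\<eta> * (s - r) < \<eta> * (s' - r')" using eta that by (intro mult_strict_left_mono) auto
    ultimately show ?thesis unfolding Phi_def by linarith
  qed
  have AB: "A s r < d \<or> B s r < d" if s01: "s \<in> {0..1}" and r01: "r \<in> {0..1}" for s r
  proof -
    obtain r0 where r0: "r0 \<in> {0..1}" "\<forall>i<n. \<bar>fs i s - gs i r0\<bar> < d" using H[OF s01] by blast
    show ?thesis
    proof (cases "r \<le> r0")
      case True
      have "B s r < d" unfolding B_def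
      proof (subst Max_less_iff)
        show "finite ((\<lambda>i. gs i r - fs i s) ` {..<n})" "(\<lambda>i. gs i r - fs i s) ` {..<n} \<noteq> {}"
          using fin_lessThan[OF n] by auto
        show "\<forall>a\<in>(\<lambda>i. gs i r - fs i s) ` {..<n}. a < d"
        proof
          fix a assume "a \<in> (\<lambda>i. gs i r - fs i s) ` {..<n}"
          then obtain i where i: "i < n" "a = gs i r - fs i s" by auto
          have "gs i r \<le> gs i r0" using inM_mono[OF gi[OF i(1)] r01 r0(1) True] .
          then show "a < d" using r0(2) i by (auto simp: abs_less_iff)
        qed
      qed
      then show ?thesis by simp
    next
      case False
      have "A s r < d" unfolding A_def
      proof (subst Max_less_iff)
        show "finite ((\<lambda>i. fs i s - gs i r) ` {..<n})" "(\<lambda>i. fs i s - gs i r) ` {..<n} \<noteq> {}"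
          using fin_lessThan[OF n] by auto
        show "\<forall>a\<in>(\<lambda>i. fs i s - gs i r) ` {..<n}. a < d"
        proof
          fix a assume "a \<in> (\<lambda>i. fs i s - gs i r) ` {..<n}"
          then obtain i where i: "i < n" "a = fs i s - gs i r" by auto
          have "gs i r0 \<le> gs i r" using inM_mono[OF gi[OF i(1)] r0(1) r01] False by simp
          then show "a < d" using r0(2) i by (auto simp: abs_less_iff)
        qed
      qed
      then show ?thesis by simp
    qed
  qed
  have diffAB: "\<bar>fs i s - gs i r\<bar> \<le> max (A s r) (B s r)" if "i < n" for i s r
  proof -
    have "fs i s - gs i r \<le> A s r" unfolding A_def by (rule Max_img_ge[OF that])
    moreover have "gs i r - fs i s \<le> B s r" unfolding B_def by (rule Max_img_ge[OF that])
    ultimately show ?thesis by (auto simp: abs_le_iff)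
  qed
  have Acont: "continuous_on S (\<lambda>s. A s (\<tau> - s))" if "S \<subseteq> {0..1}" "\<And>s. s \<in> S \<Longrightarrow> \<tau> - s \<in> {0..1}" for S \<tau>
    unfolding A_def
  proof (rule cont_Max)
    have "0 \<in> {..<n}" using n by simp
    then show "finite {..<n}" "{..<n} \<noteq> {}" by auto
    fix i assume "i \<in> {..<n}"
    then have i: "i < n" by simp
    have "continuous_on S (fs i)" using continuous_on_subset[OF inM_cont[OF fi[OF i]] that(1)] .
    moreover have "continuous_on S (\<lambda>s. gs i (\<tau> - s))"
      by (rule continuous_on_compose2[OF inM_cont[OF gi[OF i]]]) (use that(2) in \<open>auto intro!: continuous_intros\<close>)
    ultimately show "continuous_on S (\<lambda>s. fs i s - gs i (\<tau> - s))" by (intro continuous_on_diff)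
  qed
  have Bcont: "continuous_on S (\<lambda>s. B s (\<tau> - s))" if "S \<subseteq> {0..1}" "\<And>s. s \<in> S \<Longrightarrow> \<tau> - s \<in> {0..1}" for S \<tau>
    unfolding B_def
  proof (rule cont_Max)
    have "0 \<in> {..<n}" using n by simp
    then show "finite {..<n}" "{..<n} \<noteq> {}" by auto
    fix i assume "i \<in> {..<n}"
    then have i: "i < n" by simp
    have "continuous_on S (fs i)" using continuous_on_subset[OF inM_cont[OF fi[OF i]] that(1)] .
    moreover have "continuous_on S (\<lambda>s. gs i (\<tau> - s))"
      by (rule continuous_on_compose2[OF inM_cont[OF gi[OF i]]]) (use that(2) in \<open>auto intro!: continuous_intros\<close>)
    ultimately show "continuous_on S (\<lambda>s. gs i (\<tau> - s) - fs i s)" by (intro continuous_on_diff)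
  qed
  define lo where "lo \<tau> = max 0 (\<tau> - 1)" for \<tau> :: real
  define hi where "hi \<tau> = min 1 \<tau>" for \<tau> :: real
  have zero: "\<exists>!s. s \<in> {lo \<tau>..hi \<tau>} \<and> Phi s (\<tau> - s) = 0" if tau: "\<tau> \<in> {0..2}" for \<tau>
  proof -
    have lh: "lo \<tau> \<le> hi \<tau>" "lo \<tau> \<in> {0..1}" "hi \<tau> \<in> {0..1}" using tau by (auto simp: lo_def hi_def)
    have inr: "\<And>s. s \<in> {lo \<tau>..hi \<tau>} \<Longrightarrow> s \<in> {0..1} \<and> \<tau> - s \<in> {0..1}"
      using tau by (auto simp: lo_def hi_def)
    have cg: "continuous_on {lo \<tau>..hi \<tau>} (\<lambda>s. Phi s (\<tau> - s))"
    proof -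
      have S: "{lo \<tau>..hi \<tau>} \<subseteq> {0..1}" using inr by auto
      have T: "\<And>s. s \<in> {lo \<tau>..hi \<tau>} \<Longrightarrow> \<tau> - s \<in> {0..1}" using inr by blast
      have "continuous_on {lo \<tau>..hi \<tau>} (\<lambda>s. A s (\<tau> - s))" "continuous_on {lo \<tau>..hi \<tau>} (\<lambda>s. B s (\<tau> - s))"
        using Acont[OF S T] Bcont[OF S T] by auto
      then show ?thesis unfolding Phi_def by (intro continuous_intros)
    qed
    have g_lo: "Phi (lo \<tau>) (\<tau> - lo \<tau>) \<le> 0"
    proof -
      have r01: "\<tau> - lo \<tau> \<in> {0..1}" using inr lh by auto
      have "A (lo \<tau>) (\<tau> - lo \<tau>) \<le> 0" unfolding A_def
      proof (subst Max_le_iff)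
        show "finite ((\<lambda>i. fs i (lo \<tau>) - gs i (\<tau> - lo \<tau>)) ` {..<n})"
          "(\<lambda>i. fs i (lo \<tau>) - gs i (\<tau> - lo \<tau>)) ` {..<n} \<noteq> {}" using fin_lessThan[OF n] by auto
        show "\<forall>a\<in>(\<lambda>i. fs i (lo \<tau>) - gs i (\<tau> - lo \<tau>)) ` {..<n}. a \<le> 0"
        proof
          fix a assume "a \<in> (\<lambda>i. fs i (lo \<tau>) - gs i (\<tau> - lo \<tau>)) ` {..<n}"
          then obtain i where i: "i < n" "a = fs i (lo \<tau>) - gs i (\<tau> - lo \<tau>)" by auto
          have "lo \<tau> = 0 \<or> \<tau> - lo \<tau> = 1" unfolding lo_def by auto
          then show "a \<le> 0"
          proof
            assume "lo \<tau> = 0"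
            then show ?thesis using i inM_0[OF fi[OF i(1)]] inM_range[OF gi[OF i(1)] r01] by simp
          next
            assume "\<tau> - lo \<tau> = 1"
            then show ?thesis using i inM_1[OF gi[OF i(1)]] inM_range[OF fi[OF i(1)] lh(2)] by simp
          qed
        qed
      qed
      moreover have "lo \<tau> - (\<tau> - lo \<tau>) \<le> 0" using tau by (auto simp: lo_def max_def)
      ultimately show ?thesis unfolding Phi_def using d eta by (smt (verit) mult_nonneg_nonpos)
    qed
    have g_hi: "0 \<le> Phi (hi \<tau>) (\<tau> - hi \<tau>)"
    proof -
      have r01: "\<tau> - hi \<tau> \<in> {0..1}" using inr lh by auto
      have "B (hi \<tau>) (\<tau> - hi \<tau>) \<le> 0" unfolding B_def
      proof (subst Max_le_iff)
        show "finite ((\<lambda>i. gs i (\<tau> - hi \<tau>) - fs i (hi \<tau>)) ` {..<n})"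
          "(\<lambda>i. gs i (\<tau> - hi \<tau>) - fs i (hi \<tau>)) ` {..<n} \<noteq> {}" using fin_lessThan[OF n] by auto
        show "\<forall>a\<in>(\<lambda>i. gs i (\<tau> - hi \<tau>) - fs i (hi \<tau>)) ` {..<n}. a \<le> 0"
        proof
          fix a assume "a \<in> (\<lambda>i. gs i (\<tau> - hi \<tau>) - fs i (hi \<tau>)) ` {..<n}"
          then obtain i where i: "i < n" "a = gs i (\<tau> - hi \<tau>) - fs i (hi \<tau>)" by auto
          have "\<tau> - hi \<tau> = 0 \<or> hi \<tau> = 1" unfolding hi_def by auto
          then show "a \<le> 0"
          proof
            assume "\<tau> - hi \<tau> = 0"
            then show ?thesis using i inM_0[OF gi[OF i(1)]] inM_range[OF fi[OF i(1)] lh(3)] by simp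
          next
            assume "hi \<tau> = 1"
            then show ?thesis using i inM_1[OF fi[OF i(1)]] inM_range[OF gi[OF i(1)] r01] by simp
          qed
        qed
      qed
      moreover have "0 \<le> hi \<tau> - (\<tau> - hi \<tau>)" using tau by (auto simp: hi_def min_def)
      ultimately show ?thesis unfolding Phi_def using d eta by (smt (verit) mult_nonneg_nonneg)
    qed
    obtain s where s: "lo \<tau> \<le> s" "s \<le> hi \<tau>" "Phi s (\<tau> - s) = 0"
      using IVT'[of "\<lambda>s. Phi s (\<tau> - s)" "lo \<tau>" 0 "hi \<tau>", OF g_lo g_hi lh(1) cg] by blast
    show ?thesis
    proof (rule ex1I[of _ s])
      show "s \<in> {lo \<tau>..hi \<tau>} \<and> Phi s (\<tau> - s) = 0" using s by auto
      fix s' assume s': "s' \<in> {lo \<tau>..hi \<tau>} \<and> Phi s' (\<tau> - s') = 0"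
      show "s' = s"
      proof (rule ccontr)
        assume "s' \<noteq> s"
        then have "s' < s \<or> s < s'" by linarith
        then show False
        proof
          assume "s' < s"
          then have "Phi s' (\<tau> - s') < Phi s (\<tau> - s)"
            using inr[of s] inr[of s'] s s' by (intro Phistrict) auto
          then show False using s s' by simp
        next
          assume "s < s'"
          then have "Phi s (\<tau> - s) < Phi s' (\<tau> - s')"
            using inr[of s] inr[of s'] s s' by (intro Phistrict) auto
          then show False using s s' by simp
        qed
      qed
    qed
  qed
  define u where "u \<tau> = (THE s. s \<in> {lo \<tau>..hi \<tau>} \<and> Phi s (\<tau> - s) = 0)" for \<tau>
  have uP: "u \<tau> \<in> {lo \<tau>..hi \<tau>} \<and> Phi (u \<tau>) (\<tau> - u \<tau>) = 0" if "\<tau> \<in> {0..2}" for \<tau>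
    unfolding u_def using theI'[OF zero[OF that]] .
  have u01: "u \<tau> \<in> {0..1} \<and> \<tau> - u \<tau> \<in> {0..1}" if "\<tau> \<in> {0..2}" for \<tau>
    using uP[OF that] that by (auto simp: lo_def hi_def)
  have umono: "u \<tau> \<le> u \<tau>' \<and> \<tau> - u \<tau> \<le> \<tau>' - u \<tau>'" if "\<tau> \<in> {0..2}" "\<tau>' \<in> {0..2}" "\<tau> \<le> \<tau>'" for \<tau> \<tau>'
  proof (intro conjI)
    show "u \<tau> \<le> u \<tau>'"
    proof (rule ccontr)
      assume "\<not> ?thesis"
      then have "Phi (u \<tau>') (\<tau>' - u \<tau>') < Phi (u \<tau>) (\<tau> - u \<tau>)"
        using u01[OF that(1)] u01[OF that(2)] that by (intro Phistrict) auto
      then show False using uP[OF that(1)] uP[OF that(2)] by simp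
    qed
    show "\<tau> - u \<tau> \<le> \<tau>' - u \<tau>'"
    proof (rule ccontr)
      assume "\<not> ?thesis"
      then have "Phi (u \<tau>) (\<tau> - u \<tau>) < Phi (u \<tau>') (\<tau>' - u \<tau>')"
        using u01[OF that(1)] u01[OF that(2)] that by (intro Phistrict) auto
      then show False using uP[OF that(1)] uP[OF that(2)] by simp
    qed
  qed
  have ulip: "\<bar>u \<tau> - u \<tau>'\<bar> \<le> \<bar>\<tau> - \<tau>'\<bar> \<and> \<bar>(\<tau> - u \<tau>) - (\<tau>' - u \<tau>')\<bar> \<le> \<bar>\<tau> - \<tau>'\<bar>"
    if "\<tau> \<in> {0..2}" "\<tau>' \<in> {0..2}" for \<tau> \<tau>'
  proof (cases "\<tau> \<le> \<tau>'")
    case True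
    then show ?thesis using umono[OF that True] by (auto simp: abs_le_iff)
  next
    case False
    then show ?thesis using umono[OF that(2,1)] by (auto simp: abs_le_iff)
  qed
  have u0: "u 0 = 0" using uP[of 0] by (auto simp: lo_def hi_def)
  have u2: "u 2 = 1" using uP[of 2] by (auto simp: lo_def hi_def)
  define U where "U t = u (2 * t)" for t
  define V where "V t = 2 * t - u (2 * t)" for t
  have UV01: "U t \<in> {0..1} \<and> V t \<in> {0..1}" if "t \<in> {0..1}" for t
    using u01[of "2 * t"] that unfolding U_def V_def by auto
  have UVlip: "\<bar>U t - U t'\<bar> \<le> 2 * \<bar>t - t'\<bar> \<and> \<bar>V t - V t'\<bar> \<le> 2 * \<bar>t - t'\<bar>"
    if "t \<in> {0..1}" "t' \<in> {0..1}" for t t'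
  proof -
    have a: "\<bar>2 * t - 2 * t'\<bar> = 2 * \<bar>t - t'\<bar>" by (simp add: abs_if)
    have "2 * t \<in> {0..2}" "2 * t' \<in> {0..2}" using that by auto
    from ulip[OF this] show ?thesis unfolding U_def V_def a .
  qed
  have UVmono: "U t \<le> U t' \<and> V t \<le> V t'" if "t \<in> {0..1}" "t' \<in> {0..1}" "t \<le> t'" for t t'
    using umono[of "2 * t" "2 * t'"] that unfolding U_def V_def by auto
  have lipcont: "continuous_on {0..1} W" if "\<And>t t'. t \<in> {0..1} \<Longrightarrow> t' \<in> {0..1} \<Longrightarrow> \<bar>W t - W t'\<bar> \<le> 2 * \<bar>t - t'\<bar>" for W :: "real \<Rightarrow> real"
    unfolding continuous_on_iff
  proof (intro ballI allI impI)
    fix t e :: real assume t: "t \<in> {0..1}" and e: "0 < e"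
    show "\<exists>da>0. \<forall>x'\<in>{0..1}. dist x' t < da \<longrightarrow> dist (W x') (W t) < e"
    proof (intro exI[of _ "e / 2"] conjI ballI impI)
      show "0 < e / 2" using e by simp
      fix s assume s: "s \<in> {0..1}" "dist s t < e / 2"
      have "\<bar>W s - W t\<bar> \<le> 2 * \<bar>s - t\<bar>" using that[OF s(1) t] .
      also have "\<dots> < e" using s(2) by (simp add: dist_real_def)
      finally show "dist (W s) (W t) < e" by (simp add: dist_real_def)
    qed
  qed
  have Uc: "continuous_on {0..1} U"
  proof (rule lipcont)
    fix t t' :: real assume "t \<in> {0..1}" "t' \<in> {0..1}"
    then show "\<bar>U t - U t'\<bar> \<le> 2 * \<bar>t - t'\<bar>" using UVlip by simp
  qed
  have Vc: "continuous_on {0..1} V"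
  proof (rule lipcont)
    fix t t' :: real assume "t \<in> {0..1}" "t' \<in> {0..1}"
    then show "\<bar>V t - V t'\<bar> \<le> 2 * \<bar>t - t'\<bar>" using UVlip by simp
  qed
  have U0: "U 0 = 0" "V 0 = 0" using u0 by (auto simp: U_def V_def)
  have U1: "U 1 = 1" "V 1 = 1" using u2 by (auto simp: U_def V_def)
  have reparam: "(\<lambda>i t. hs i (W t)) \<in> tuples n \<and> im n (\<lambda>i t. hs i (W t)) = im n hs"
    if hs: "hs \<in> tuples n" and Wc: "continuous_on {0..1} W" and W01: "\<And>t. t \<in> {0..1} \<Longrightarrow> W t \<in> {0..1}"
      and Wm: "\<And>t t'. t \<in> {0..1} \<Longrightarrow> t' \<in> {0..1} \<Longrightarrow> t \<le> t' \<Longrightarrow> W t \<le> W t'"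
      and W0: "W 0 = 0" and W1: "W 1 = 1" for hs W
  proof
    show "(\<lambda>i t. hs i (W t)) \<in> tuples n" unfolding tuples_def
    proof (intro CollectI allI impI)
      fix i assume i: "i < n"
      have hi: "inM (hs i)" using hs i tuples_inM by blast
      show "inM (\<lambda>t. hs i (W t))" unfolding inM_def
      proof (intro conjI)
        show "continuous_on {0..1} (\<lambda>t. hs i (W t))"
          by (rule continuous_on_compose2[OF inM_cont[OF hi] Wc]) (use W01 in auto)
        show "mono_on {0..1} (\<lambda>t. hs i (W t))"
          by (rule mono_onI) (use inM_mono[OF hi] W01 Wm in auto)
        show "hs i (W 0) = 0" using W0 inM_0[OF hi] by simp
        show "hs i (W 1) = 1" using W1 inM_1[OF hi] by simp
      qed
    qed
    show "im n (\<lambda>i t. hs i (W t)) = im n hs"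
    proof
      show "im n (\<lambda>i t. hs i (W t)) \<subseteq> im n hs"
      proof
        fix p assume "p \<in> im n (\<lambda>i t. hs i (W t))"
        then obtain t where t: "t \<in> {0..1}" "p = pt n (\<lambda>i. hs i (W t))" unfolding im_def by auto
        show "p \<in> im n hs" unfolding im_def mem_Collect_eq using t W01[OF t(1)] by (intro exI[of _ "W t"]) simp
      qed
      show "im n hs \<subseteq> im n (\<lambda>i t. hs i (W t))"
      proof
        fix p assume "p \<in> im n hs"
        then obtain s where s: "s \<in> {0..1}" "p = pt n (\<lambda>i. hs i s)" unfolding im_def by auto
        obtain t where t: "0 \<le> t" "t \<le> 1" "W t = s"
          using IVT'[of W 0 s 1, OF _ _ _ Wc] s W0 W1 by auto
        show "p \<in> im n (\<lambda>i t. hs i (W t))" unfolding im_def mem_Collect_eq using t s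
          by (intro exI[of _ t]) simp
      qed
    qed
  qed
  have RU: "(\<lambda>i t. fs i (U t)) \<in> tuples n \<and> im n (\<lambda>i t. fs i (U t)) = im n fs"
    by (rule reparam[OF fs Uc]) (use UV01 UVmono U0 U1 in auto)
  have RV: "(\<lambda>i t. gs i (V t)) \<in> tuples n \<and> im n (\<lambda>i t. gs i (V t)) = im n gs"
    by (rule reparam[OF gs Vc]) (use UV01 UVmono U0 U1 in auto)
  have bound: "supdist (fs i \<circ> U) (gs i \<circ> V) \<le> d + \<eta>" if i: "i < n" for i
  proof (rule supdist_le)
    fix t :: real assume t: "t \<in> {0..1}"
    have tau: "2 * t \<in> {0..2}" using t by auto
    define s where "s = u (2 * t)"
    define r where "r = 2 * t - u (2 * t)"
    have sr: "s \<in> {0..1}" "r \<in> {0..1}" using u01[OF tau] unfolding s_def r_def by auto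
    have P0: "Phi s r = 0" using uP[OF tau] unfolding s_def r_def by simp
    have "\<bar>r - s\<bar> \<le> 1" using sr by auto
    then have "\<bar>\<eta> * (s - r)\<bar> \<le> \<eta>" using eta by (simp add: abs_mult abs_minus_commute mult_le_cancel_left1)
    then have "\<bar>max (A s r) d - max (B s r) d\<bar> \<le> \<eta>" using P0 unfolding Phi_def by linarith
    then have "max (A s r) (B s r) \<le> d + \<eta>" using AB[OF sr] d eta by linarith
    then have "\<bar>fs i s - gs i r\<bar> \<le> d + \<eta>" using diffAB[OF i, of s r] by linarith
    then show "\<bar>(fs i \<circ> U) t - (gs i \<circ> V) t\<bar> \<le> d + \<eta>" unfolding U_def V_def s_def r_def by simp
  qed
  show ?thesis
    apply (rule exI[of _ "\<lambda>i t. fs i (U t)"], rule exI[of _ "\<lambda>i t. gs i (V t)"])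
    using RU RV bound by (simp add: comp_def)
qed

lemma supd_pt:
  "supd n (pt n x) (pt n y) = Max ((\<lambda>i. \<bar>x i - y i\<bar>) ` {..<n})"
proof -
  have "(\<lambda>i. \<bar>pt n x i - pt n y i\<bar>) ` {..<n} = (\<lambda>i. \<bar>x i - y i\<bar>) ` {..<n}"
    by (rule image_cong) (auto simp: pt_def)
  then show ?thesis unfolding supd_def by simp
qed

lemma supd_nonneg: "n \<ge> 1 \<Longrightarrow> 0 \<le> supd n a b"
proof -
  assume n: "n \<ge> 1"
  have "\<bar>a 0 - b 0\<bar> \<le> supd n a b" unfolding supd_def using n by (intro Max_img_ge) auto
  then show ?thesis by linarith
qed

lemma tupdist_ge:
  assumes "i < n" shows "supdist (fs i) (gs i) \<le> tupdist n fs gs"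
  unfolding tupdist_def using assms by (rule Max_img_ge)

lemma tupdist_nonneg:
  assumes n: "n \<ge> 1" and fs: "fs \<in> tuples n" and gs: "gs \<in> tuples n"
  shows "0 \<le> tupdist n fs gs"
proof -
  have "0 \<le> supdist (fs 0) (gs 0)" using supdist_props(1) tuples_inM[OF fs] tuples_inM[OF gs] n by simp
  then show ?thesis using tupdist_ge[of 0 n fs gs] n by linarith
qed

lemma supd_le_tupdist:
  assumes n: "n \<ge> 1" and fs: "fs \<in> tuples n" and gs: "gs \<in> tuples n" and t: "t \<in> {0..1}"
  shows "supd n (pt n (\<lambda>i. fs i t)) (pt n (\<lambda>i. gs i t)) \<le> tupdist n fs gs"
  unfolding supd_pt
proof (subst Max_le_iff)
  show "finite ((\<lambda>i. \<bar>fs i t - gs i t\<bar>) ` {..<n})" "(\<lambda>i. \<bar>fs i t - gs i t\<bar>) ` {..<n} \<noteq> {}"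
    using fin_lessThan[OF n] by auto
  show "\<forall>a\<in>(\<lambda>i. \<bar>fs i t - gs i t\<bar>) ` {..<n}. a \<le> tupdist n fs gs"
  proof
    fix a assume "a \<in> (\<lambda>i. \<bar>fs i t - gs i t\<bar>) ` {..<n}"
    then obtain i where i: "i < n" "a = \<bar>fs i t - gs i t\<bar>" by auto
    have "a \<le> supdist (fs i) (gs i)" using supdist_props(3)[OF tuples_inM[OF fs i(1)] tuples_inM[OF gs i(1)] t] i by simp
    then show "a \<le> tupdist n fs gs" using tupdist_ge[OF i(1), of fs gs] by linarith
  qed
qed

lemma supd_le1:
  assumes n: "n \<ge> 1" and fs: "fs \<in> tuples n" and gs: "gs \<in> tuples n" and s: "s \<in> {0..1}" and t: "t \<in> {0..1}"
  shows "supd n (pt n (\<lambda>i. fs i s)) (pt n (\<lambda>i. gs i t)) \<le> 1"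
  unfolding supd_pt
proof (subst Max_le_iff)
  show "finite ((\<lambda>i. \<bar>fs i s - gs i t\<bar>) ` {..<n})" "(\<lambda>i. \<bar>fs i s - gs i t\<bar>) ` {..<n} \<noteq> {}"
    using fin_lessThan[OF n] by auto
  show "\<forall>a\<in>(\<lambda>i. \<bar>fs i s - gs i t\<bar>) ` {..<n}. a \<le> 1"
  proof
    fix a assume "a \<in> (\<lambda>i. \<bar>fs i s - gs i t\<bar>) ` {..<n}"
    then obtain i where i: "i < n" "a = \<bar>fs i s - gs i t\<bar>" by auto
    show "a \<le> 1" using inM_range[OF tuples_inM[OF fs i(1)] s] inM_range[OF tuples_inM[OF gs i(1)] t] i
      by (simp add: abs_le_iff)
  qed
qed

lemma hausd_le_tupdist:
  assumes n: "n \<ge> 1" and fs: "fs \<in> tuples n" and gs: "gs \<in> tuples n"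
  shows "hausd n (im n fs) (im n gs) \<le> tupdist n fs gs"
proof -
  have ne: "im n fs \<noteq> {}" "im n gs \<noteq> {}" using im_conn[OF n fs] im_conn[OF n gs]
    unfolding conn_chains_def is_chain01_def by auto
  have bb: "bdd_below ((\<lambda>b. supd n a b) ` B)" for a B using supd_nonneg[OF n] by (intro bdd_belowI2) auto
  have bb2: "bdd_below ((\<lambda>a. supd n a b) ` B)" for b B using supd_nonneg[OF n] by (intro bdd_belowI2) auto
  have 1: "(SUP a\<in>im n fs. INF b\<in>im n gs. supd n a b) \<le> tupdist n fs gs"
  proof (rule cSUP_least[OF ne(1)])
    fix a assume "a \<in> im n fs"
    then obtain t where t: "t \<in> {0..1}" "a = pt n (\<lambda>i. fs i t)" unfolding im_def by auto
    have b: "pt n (\<lambda>i. gs i t) \<in> im n gs" unfolding im_def mem_Collect_eq using t by (intro exI[of _ t]) simp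
    have "(INF b\<in>im n gs. supd n a b) \<le> supd n a (pt n (\<lambda>i. gs i t))" by (rule cINF_lower[OF bb b])
    also have "\<dots> \<le> tupdist n fs gs" unfolding t(2) by (rule supd_le_tupdist[OF n fs gs t(1)])
    finally show "(INF b\<in>im n gs. supd n a b) \<le> tupdist n fs gs" .
  qed
  have 2: "(SUP b\<in>im n gs. INF a\<in>im n fs. supd n a b) \<le> tupdist n fs gs"
  proof (rule cSUP_least[OF ne(2)])
    fix b assume "b \<in> im n gs"
    then obtain t where t: "t \<in> {0..1}" "b = pt n (\<lambda>i. gs i t)" unfolding im_def by auto
    have a: "pt n (\<lambda>i. fs i t) \<in> im n fs" unfolding im_def mem_Collect_eq using t by (intro exI[of _ t]) simp
    have "(INF a\<in>im n fs. supd n a b) \<le> supd n (pt n (\<lambda>i. fs i t)) b" by (rule cINF_lower[OF bb2 a])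
    also have "\<dots> \<le> tupdist n fs gs" unfolding t(2) by (rule supd_le_tupdist[OF n fs gs t(1)])
    finally show "(INF a\<in>im n fs. supd n a b) \<le> tupdist n fs gs" .
  qed
  show ?thesis unfolding hausd_def using 1 2 by simp
qed

lemma hausd_prop:
  assumes n: "n \<ge> 1" and fs: "fs \<in> tuples n" and gs: "gs \<in> tuples n"
    and h: "hausd n (im n fs) (im n gs) < d" and s: "s \<in> {0..1}"
  shows "\<exists>r\<in>{0..1}. \<forall>i<n. \<bar>fs i s - gs i r\<bar> < d"
proof -
  have ne: "im n gs \<noteq> {}" using im_conn[OF n gs] unfolding conn_chains_def is_chain01_def by auto
  have bb: "bdd_below ((\<lambda>b. supd n a b) ` B)" for a B using supd_nonneg[OF n] by (intro bdd_belowI2) auto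
  have g0: "pt n (\<lambda>i. gs i 0) \<in> im n gs" unfolding im_def mem_Collect_eq by (intro exI[of _ "0::real"]) simp
  have ba: "bdd_above ((\<lambda>a. INF b\<in>im n gs. supd n a b) ` im n fs)"
  proof (rule bdd_aboveI2)
    fix a assume "a \<in> im n fs"
    then obtain t where t: "t \<in> {0..1}" "a = pt n (\<lambda>i. fs i t)" unfolding im_def by auto
    have "(INF b\<in>im n gs. supd n a b) \<le> supd n a (pt n (\<lambda>i. gs i 0))" by (rule cINF_lower[OF bb g0])
    also have "\<dots> \<le> 1" unfolding t(2) by (rule supd_le1[OF n fs gs t(1)]) simp
    finally show "(INF b\<in>im n gs. supd n a b) \<le> 1" .
  qed
  define a where "a = pt n (\<lambda>i. fs i s)"
  have a: "a \<in> im n fs" unfolding a_def im_def mem_Collect_eq using s by (intro exI[of _ s]) simp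
  have "(INF b\<in>im n gs. supd n a b) \<le> (SUP a\<in>im n fs. INF b\<in>im n gs. supd n a b)"
    by (rule cSUP_upper[OF a ba])
  also have "\<dots> \<le> hausd n (im n fs) (im n gs)" unfolding hausd_def by simp
  finally have "(INF b\<in>im n gs. supd n a b) < d" using h by linarith
  then obtain b where b: "b \<in> im n gs" "supd n a b < d" using cINF_less_iff[OF ne bb] by blast
  then obtain r where r: "r \<in> {0..1}" "b = pt n (\<lambda>i. gs i r)" unfolding im_def by auto
  have "\<forall>i<n. \<bar>fs i s - gs i r\<bar> < d"
  proof (intro allI impI)
    fix i assume i: "i < n"
    have "\<bar>fs i s - gs i r\<bar> \<le> supd n a b" unfolding a_def r(2) supd_pt by (rule Max_img_ge[OF i])
    then show "\<bar>fs i s - gs i r\<bar> < d" using b(2) by linarith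
  qed
  then show ?thesis using r(1) by blast
qed

lemma isometry:
  assumes n: "n \<ge> 1" and fs: "fs \<in> tuples n" and gs: "gs \<in> tuples n"
  shows "hausd n (im n fs) (im n gs) = tdist n (tp n fs) (tp n gs)"
proof -
  define R where "R = {tupdist n fs' gs' | fs' gs'. fs' \<in> tuples n \<and> gs' \<in> tuples n \<and> tp n fs' = tp n fs \<and> tp n gs' = tp n gs}"
  have td: "tdist n (tp n fs) (tp n gs) = Inf R" unfolding tdist_def R_def ..
  have "tupdist n fs gs \<in> R" unfolding R_def mem_Collect_eq
    by (intro exI[of _ fs] exI[of _ gs]) (simp add: fs gs)
  then have Rne: "R \<noteq> {}" by blast
  have Rb: "bdd_below R"
  proof (rule bdd_belowI[of _ 0])
    fix x assume "x \<in> R"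
    then obtain fs' gs' where x: "x = tupdist n fs' gs'" "fs' \<in> tuples n" "gs' \<in> tuples n"
      unfolding R_def by blast
    show "0 \<le> x" unfolding x(1) by (rule tupdist_nonneg[OF n x(2,3)])
  qed
  have 1: "hausd n (im n fs) (im n gs) \<le> Inf R"
  proof (rule cInf_greatest[OF Rne])
    fix x assume "x \<in> R"
    then obtain fs' gs' where x: "x = tupdist n fs' gs'" "fs' \<in> tuples n" "gs' \<in> tuples n"
      "tp n fs' = tp n fs" "tp n gs' = tp n gs" unfolding R_def by blast
    have "im n fs' = im n fs" "im n gs' = im n gs" using im_of_tp[OF n x(2) fs x(4)] im_of_tp[OF n x(3) gs x(5)] by auto
    then show "hausd n (im n fs) (im n gs) \<le> x" using hausd_le_tupdist[OF n x(2,3)] x(1) by simp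
  qed
  have 2: "Inf R \<le> hausd n (im n fs) (im n gs)"
  proof (rule field_le_epsilon)
    fix e :: real assume e: "0 < e"
    define d where "d = hausd n (im n fs) (im n gs) + e / 2"
    have h0: "0 \<le> hausd n (im n fs) (im n gs)"
    proof -
      have ne: "im n fs \<noteq> {}" "im n gs \<noteq> {}" using im_conn[OF n fs] im_conn[OF n gs]
        unfolding conn_chains_def is_chain01_def by auto
      obtain a where a: "a \<in> im n fs" using ne by blast
      have bb: "bdd_below ((\<lambda>b. supd n a b) ` im n gs)" using supd_nonneg[OF n] by (intro bdd_belowI2) auto
      have "0 \<le> (INF b\<in>im n gs. supd n a b)" using supd_nonneg[OF n] ne(2) by (intro cINF_greatest) auto
      also have "\<dots> \<le> (SUP a\<in>im n fs. INF b\<in>im n gs. supd n a b)"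
      proof (rule cSUP_upper[OF a])
        have g0: "pt n (\<lambda>i. gs i 0) \<in> im n gs" unfolding im_def mem_Collect_eq by (intro exI[of _ "0::real"]) simp
        show "bdd_above ((\<lambda>a. INF b\<in>im n gs. supd n a b) ` im n fs)"
        proof (rule bdd_aboveI2)
          fix a assume "a \<in> im n fs"
          then obtain t where t: "t \<in> {0..1}" "a = pt n (\<lambda>i. fs i t)" unfolding im_def by auto
          have bb': "bdd_below ((\<lambda>b. supd n a b) ` im n gs)" using supd_nonneg[OF n] by (intro bdd_belowI2) auto
          have "(INF b\<in>im n gs. supd n a b) \<le> supd n a (pt n (\<lambda>i. gs i 0))" by (rule cINF_lower[OF bb' g0])
          also have "\<dots> \<le> 1" unfolding t(2) by (rule supd_le1[OF n fs gs t(1)]) simp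
          finally show "(INF b\<in>im n gs. supd n a b) \<le> 1" .
        qed
      qed
      also have "\<dots> \<le> hausd n (im n fs) (im n gs)" unfolding hausd_def by simp
      finally show ?thesis .
    qed
    have dpos: "0 < d" using h0 e by (simp add: d_def)
    have H: "\<And>s. s \<in> {0..1} \<Longrightarrow> \<exists>r\<in>{0..1}. \<forall>i<n. \<bar>fs i s - gs i r\<bar> < d"
      using hausd_prop[OF n fs gs] e unfolding d_def by simp
    obtain fs' gs' where c: "fs' \<in> tuples n" "gs' \<in> tuples n" "im n fs' = im n fs" "im n gs' = im n gs"
      "\<forall>i<n. supdist (fs' i) (gs' i) \<le> d + e / 2"
    proof -
      have e2: "0 < e / 2" using e by simp
      show ?thesis using coupling[OF n fs gs dpos e2 H] that by blast
    qed
    have "tp n fs' = tp n fs" "tp n gs' = tp n gs" using tp_of_im[OF n c(1) fs c(3)] tp_of_im[OF n c(2) gs c(4)] by auto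
    then have inR: "tupdist n fs' gs' \<in> R" unfolding R_def mem_Collect_eq
      by (intro exI[of _ fs'] exI[of _ gs']) (simp add: c)
    have "tupdist n fs' gs' \<le> d + e / 2" unfolding tupdist_def
    proof (subst Max_le_iff)
      show "finite ((\<lambda>i. supdist (fs' i) (gs' i)) ` {..<n})" "(\<lambda>i. supdist (fs' i) (gs' i)) ` {..<n} \<noteq> {}"
        using fin_lessThan[OF n] by auto
      show "\<forall>a\<in>(\<lambda>i. supdist (fs' i) (gs' i)) ` {..<n}. a \<le> d + e / 2" using c(5) by auto
    qed
    then have "Inf R \<le> d + e / 2" using cInf_lower[OF inR Rb] by linarith
    then show "Inf R \<le> hausd n (im n fs) (im n gs) + e" unfolding d_def by simp
  qed
  show ?thesis using 1 2 td by simp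
qed

lemma imT_tp:
  assumes n: "n \<ge> 1" and fs: "fs \<in> tuples n"
  shows "imT n (tp n fs) = im n fs"
proof -
  have ex: "\<exists>fs'. fs' \<in> tuples n \<and> tp n fs' = tp n fs" using fs by blast
  define fs' where "fs' = (SOME fs'. fs' \<in> tuples n \<and> tp n fs' = tp n fs)"
  have "fs' \<in> tuples n \<and> tp n fs' = tp n fs" unfolding fs'_def by (rule someI_ex[OF ex])
  then have "im n fs' = im n fs" using im_of_tp[OF n _ fs] by simp
  then show ?thesis unfolding imT_def fs'_def by simp
qed

theorem mainTheorem15:
  fixes n :: nat
  assumes "n \<ge> 1"
  shows "(\<forall>fs\<in>tuples n. \<forall>gs\<in>tuples n. tp n fs = tp n gs \<longrightarrow> im n fs = im n gs)
    \<and> bij_betw (imT n) (Sn n) (conn_chains n)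
    \<and> (\<forall>p\<in>Sn n. \<forall>q\<in>Sn n. hausd n (imT n p) (imT n q) = tdist n p q)"
proof (intro conjI)
  note n = assms
  show "\<forall>fs\<in>tuples n. \<forall>gs\<in>tuples n. tp n fs = tp n gs \<longrightarrow> im n fs = im n gs"
  proof (intro ballI impI)
    fix fs gs assume "fs \<in> tuples n" "gs \<in> tuples n" "tp n fs = tp n gs"
    then show "im n fs = im n gs" by (rule im_of_tp[OF n])
  qed
  show "bij_betw (imT n) (Sn n) (conn_chains n)"
    unfolding bij_betw_def
  proof (intro conjI)
    show "inj_on (imT n) (Sn n)"
    proof (rule inj_onI)
      fix p q assume p: "p \<in> Sn n" and q: "q \<in> Sn n" and eq: "imT n p = imT n q"
      obtain fs where fs: "fs \<in> tuples n" "p = tp n fs" using p unfolding Sn_def by blast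
      obtain gs where gs: "gs \<in> tuples n" "q = tp n gs" using q unfolding Sn_def by blast
      have "im n fs = im n gs" using eq imT_tp[OF n fs(1)] imT_tp[OF n gs(1)] fs(2) gs(2) by simp
      then show "p = q" using tp_of_im[OF n fs(1) gs(1)] fs(2) gs(2) by simp
    qed
    show "imT n ` Sn n = conn_chains n"
    proof
      show "imT n ` Sn n \<subseteq> conn_chains n"
      proof
        fix C assume "C \<in> imT n ` Sn n"
        then obtain fs where fs: "fs \<in> tuples n" "C = imT n (tp n fs)" unfolding Sn_def by blast
        then show "C \<in> conn_chains n" using imT_tp[OF n fs(1)] im_conn[OF n fs(1)] by simp
      qed
      show "conn_chains n \<subseteq> imT n ` Sn n"
      proof
        fix C assume "C \<in> conn_chains n"
        then obtain fs where fs: "fs \<in> tuples n" "im n fs = C" using conn_surj[OF n] by blast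
        have "tp n fs \<in> Sn n" unfolding Sn_def using fs(1) by blast
        moreover have "C = imT n (tp n fs)" using imT_tp[OF n fs(1)] fs(2) by simp
        ultimately show "C \<in> imT n ` Sn n" by blast
      qed
    qed
  qed
  show "\<forall>p\<in>Sn n. \<forall>q\<in>Sn n. hausd n (imT n p) (imT n q) = tdist n p q"
  proof (intro ballI)
    fix p q assume p: "p \<in> Sn n" and q: "q \<in> Sn n"
    obtain fs where fs: "fs \<in> tuples n" "p = tp n fs" using p unfolding Sn_def by blast
    obtain gs where gs: "gs \<in> tuples n" "q = tp n gs" using q unfolding Sn_def by blast
    show "hausd n (imT n p) (imT n q) = tdist n p q"
      unfolding fs(2) gs(2) imT_tp[OF n fs(1)] imT_tp[OF n gs(1)] by (rule isometry[OF n fs(1) gs(1)])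
  qed
qed

end
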